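(* Let $\mathfrak{g}$ be a finite-dimensional simple Lie algebra over $\mathbb{C}$ with root system $\Delta$, simple roots $\Pi=\{\alpha_1,\dots,\alpha_n\}$, Weyl group $W$ with longest element $w_0$, and suppose the fundamental weight $\varpi_i$ is minuscule. Let $\Lambda_{\varpi_i}$ be the set of weights of the irreducible $\mathfrak{g}$-module of highest weight $\varpi_i$, and let $w_0^i$ be the longest element of the subgroup of $W$ generated by $s_{\alpha_j}$, $j\neq i$. Then there is an isomorphism of complemented posets $(\Lambda_{\varpi_i},w_0)\cong J([\alpha_i^\vee],w_0^i)$, where $[\alpha_i^\vee]$ is taken in the dual root system $\Delta^\vee$.
   Context: $\varpi_i$ is minuscule if $W$ acts transitively on $\Lambda_{\varpi_i}$. $\Lambda_{\varpi_i}$ is ordered by $\mu\le\nu$ iff $\nu-\mu$ is a nonnegative integer combination of simple roots; $w_0$ acts on it as an order-reversing involution. In $\Delta^\vee$ with positive system $(\Delta^\vee)^+$ and simple coroots $\alpha_j^\vee=2\alpha_j/(\alpha_j,\alpha_j)$, $[\alpha_i^\vee]=\{\beta\in(\Delta^\vee)^+:\text{coefficient of }\alpha_i^\vee\text{ in }\beta\text{ is }1\}$ with the order $\beta\le\beta'$ iff $\beta'-\beta$ is a nonnegative integer combination of simple coroots; $w_0^i$ (acting via the Weyl group of $\Delta^\vee$, identified with $W$) preserves $[\alpha_i^\vee]$ and acts as an order-reversing involution. A complemented poset is a pair $(P,c)$ with $c$ an order-reversing involution of $P$; $J(P,c)$ denotes the poset of lower ideals of $P$ under inclusion with the order-reversing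 involution $I\mapsto P\setminus c(I)$. An isomorphism of complemented posets is an order isomorphism intertwining the involutions. *)

theory Defs
  imports "HOL-Analysis.Analysis"
begin

text \<open>Abstract (real, Euclidean) root systems; the root system of a complex simple
Lie algebra is an irreducible reduced crystallographic root system.\<close>

definition refl :: "'a::real_inner \<Rightarrow> 'a \<Rightarrow> 'a" where
  "refl a v = v - (2 * (v \<bullet> a) / (a \<bullet> a)) *\<^sub>R a"

definition coroot :: "'a::real_inner \<Rightarrow> 'a" where
  "coroot a = (2 / (a \<bullet> a)) *\<^sub>R a"

definition root_system :: "'a::euclidean_space set \<Rightarrow> bool" where
  "root_system R \<longleftrightarrow> finite R \<and> 0 \<notin> R \<and> span R = UNIV
     \<and> (\<forall>a\<in>R. refl a ` R \<subseteq> R)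
     \<and> (\<forall>a\<in>R. \<forall>b\<in>R. 2 * (b \<bullet> a) / (a \<bullet> a) \<in> \<int>)
     \<and> (\<forall>a\<in>R. \<forall>c::real. c *\<^sub>R a \<in> R \<longrightarrow> c = 1 \<or> c = -1)"

definition irreducible_rs :: "'a::euclidean_space set \<Rightarrow> bool" where
  "irreducible_rs R \<longleftrightarrow> \<not> (\<exists>A B. A \<noteq> {} \<and> B \<noteq> {} \<and> A \<union> B = R \<and> A \<inter> B = {}
       \<and> (\<forall>a\<in>A. \<forall>b\<in>B. a \<bullet> b = 0))"

definition nn_comb :: "'a::real_vector set \<Rightarrow> 'a \<Rightarrow> bool" where
  "nn_comb S v \<longleftrightarrow> (\<exists>c::'a \<Rightarrow> nat. v = (\<Sum>b\<in>S. of_nat (c b) *\<^sub>R b))"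

definition is_base :: "'a::euclidean_space set \<Rightarrow> 'a set \<Rightarrow> bool" where
  "is_base R Sm \<longleftrightarrow> Sm \<subseteq> R \<and> independent Sm \<and> (\<forall>a\<in>R. nn_comb Sm a \<or> nn_comb Sm (- a))"

definition pos_roots :: "'a::euclidean_space set \<Rightarrow> 'a set \<Rightarrow> 'a set" where
  "pos_roots R Sm = {a \<in> R. nn_comb Sm a}"

fun word_map :: "'a::real_inner list \<Rightarrow> 'a \<Rightarrow> 'a" where
  "word_map [] = id"
| "word_map (a # as) = refl a \<circ> word_map as"

definition gen_group :: "'a::real_inner set \<Rightarrow> ('a \<Rightarrow> 'a) set" where
  "gen_group S = {word_map ws | ws. set ws \<subseteq> S}"

definition weyl :: "'a::real_inner set \<Rightarrow> ('a \<Rightarrow> 'a) set" where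
  "weyl R = gen_group R"

definition word_len :: "'a::real_inner set \<Rightarrow> ('a \<Rightarrow> 'a) \<Rightarrow> nat" where
  "word_len S w = (LEAST k. \<exists>ws. set ws \<subseteq> S \<and> length ws = k \<and> word_map ws = w)"

definition longest_elt :: "('a::real_inner \<Rightarrow> 'a) set \<Rightarrow> 'a set \<Rightarrow> ('a \<Rightarrow> 'a)" where
  "longest_elt G S = (THE w. w \<in> G \<and> (\<forall>v\<in>G. word_len S v \<le> word_len S w))"

definition w0 :: "'a::euclidean_space set \<Rightarrow> 'a set \<Rightarrow> ('a \<Rightarrow> 'a)" where
  "w0 R Sm = longest_elt (weyl R) Sm"

definition w0i :: "'a::euclidean_space set \<Rightarrow> 'a \<Rightarrow> ('a \<Rightarrow> 'a)" where
  "w0i Sm ai = longest_elt (gen_group (Sm - {ai})) (Sm - {ai})"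

definition fund_weight :: "'a::euclidean_space set \<Rightarrow> 'a \<Rightarrow> 'a" where
  "fund_weight Sm ai = (THE v. \<forall>b\<in>Sm. 2 * (v \<bullet> b) / (b \<bullet> b) = (if b = ai then 1 else 0))"

definition root_le :: "'a::real_vector set \<Rightarrow> 'a \<Rightarrow> 'a \<Rightarrow> bool" where
  "root_le Sm mu nu \<longleftrightarrow> nn_comb Sm (nu - mu)"

text \<open>Set of weights of the irreducible module of (dominant integral) highest weight lam:
  mu is a weight iff w mu \<le> lam for all w in W (Humphreys, Sect. 21.3).\<close>
definition weights_irrep :: "'a::euclidean_space set \<Rightarrow> 'a set \<Rightarrow> 'a \<Rightarrow> 'a set" where
  "weights_irrep R Sm lam = {mu. \<forall>w\<in>weyl R. root_le Sm (w mu) lam}"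

definition minuscule :: "'a::euclidean_space set \<Rightarrow> 'a set \<Rightarrow> 'a \<Rightarrow> bool" where
  "minuscule R Sm ai \<longleftrightarrow>
     (\<forall>mu\<in>weights_irrep R Sm (fund_weight Sm ai). \<forall>nu\<in>weights_irrep R Sm (fund_weight Sm ai).
        \<exists>w\<in>weyl R. w mu = nu)"

text \<open>[alpha_i^vee]: positive coroots whose coefficient of alpha_i^vee (w.r.t. the simple
  coroots) equals 1\<close>
definition coroot_class :: "'a::euclidean_space set \<Rightarrow> 'a set \<Rightarrow> 'a \<Rightarrow> 'a set" where
  "coroot_class R Sm ai =
     {b \<in> coroot ` pos_roots R Sm. representation (coroot ` Sm) b (coroot ai) = 1}"

definition lower_ideals :: "'b set \<Rightarrow> ('b \<Rightarrow> 'b \<Rightarrow> bool) \<Rightarrow> 'b set set" where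
  "lower_ideals P le = {I. I \<subseteq> P \<and> (\<forall>x\<in>I. \<forall>y\<in>P. le y x \<longrightarrow> y \<in> I)}"

text \<open>J(P,c): lower ideals with involution I \<mapsto> P - c(I)\<close>
definition ideal_compl :: "'b set \<Rightarrow> ('b \<Rightarrow> 'b) \<Rightarrow> 'b set \<Rightarrow> 'b set" where
  "ideal_compl P c I = P - c ` I"

definition compl_poset_iso ::
  "'b set \<Rightarrow> ('b \<Rightarrow> 'b \<Rightarrow> bool) \<Rightarrow> ('b \<Rightarrow> 'b) \<Rightarrow>
   'c set \<Rightarrow> ('c \<Rightarrow> 'c \<Rightarrow> bool) \<Rightarrow> ('c \<Rightarrow> 'c) \<Rightarrow> ('b \<Rightarrow> 'c) \<Rightarrow> bool" where
  "compl_poset_iso P leP c Q leQ d f \<longleftrightarrow> bij_betw f P Q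
     \<and> (\<forall>x\<in>P. \<forall>y\<in>P. leP x y \<longleftrightarrow> leQ (f x) (f y))
     \<and> (\<forall>x\<in>P. f (c x) = d (f x))"

end

theory Submission
  imports Defs
begin


lemma inner_coroot: "x \<bullet> coroot a = 2 * (x \<bullet> a) / (a \<bullet> a)"
  by (simp add: coroot_def)

lemma refl_alt: "refl a v = v - (v \<bullet> coroot a) *\<^sub>R a"
  by (simp add: refl_def inner_coroot)

lemma refl_zero_vec[simp]: "refl 0 v = v"
  by (simp add: refl_def)

lemma refl_refl[simp]: "refl a (refl a v) = (v::'a::real_inner)"
proof (cases "a = 0")
  case False
  then have aa: "a \<bullet> a \<noteq> 0" by simp
  show ?thesis using aa
    by (simp add: refl_def inner_diff_left algebra_simps field_simps)
qed simp

lemma refl_comp_refl[simp]: "refl a \<circ> refl a = id"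
  by (rule ext) simp

lemma refl_linear: "linear (refl (a::'a::real_inner))"
  by (rule linearI) (simp_all add: refl_def inner_add_left add_divide_distrib algebra_simps
      scaleR_add_left scaleR_diff_right)

lemma refl_inner: "refl a x \<bullet> refl a y = x \<bullet> (y::'a::real_inner)"
proof (cases "a = 0")
  case False
  then have aa: "a \<bullet> a \<noteq> 0" by simp
  show ?thesis using aa
    by (simp add: refl_def inner_diff_left inner_diff_right algebra_simps field_simps inner_commute)
qed simp

lemma refl_self: "refl a a = - (a::'a::real_inner)"
  by (cases "a = 0") (simp_all add: refl_def scaleR_2)

lemma refl_neg_arg: "refl a (- v) = - refl a (v::'a::real_inner)"
  by (simp add: refl_def)

lemma refl_neg_root: "refl (- a) = refl (a::'a::real_inner)"
  by (rule ext) (simp add: refl_def)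

definition orth :: "('a::real_inner \<Rightarrow> 'a) \<Rightarrow> bool" where
  "orth w \<longleftrightarrow> linear w \<and> (\<forall>x y. w x \<bullet> w y = x \<bullet> y)"

lemma orth_id: "orth id" by (simp add: orth_def linear_id)

lemma orth_refl: "orth (refl a)" by (simp add: orth_def refl_linear refl_inner)

lemma orth_comp: "orth u \<Longrightarrow> orth v \<Longrightarrow> orth (u \<circ> v)"
  by (simp add: orth_def linear_compose)

lemma orth_word_map: "orth (word_map ws)"
  by (induction ws) (simp_all only: word_map.simps orth_id orth_refl orth_comp)

lemma orth_linear: "orth w \<Longrightarrow> linear w" by (simp add: orth_def)

lemma orth_inner: "orth w \<Longrightarrow> w x \<bullet> w y = x \<bullet> y" by (simp add: orth_def)

lemma refl_conj: assumes "orth w" shows "refl (w a) (w x) = w (refl a x)"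
proof -
  have l: "linear w" using assms by (simp add: orth_def)
  show ?thesis using assms
    by (simp add: refl_def orth_def linear_diff[OF l] linear_scale[OF l])
qed

lemma coroot_orth: assumes "orth w" shows "coroot (w a) = w (coroot a)"
proof -
  have l: "linear w" using assms by (simp add: orth_def)
  show ?thesis using assms
    by (simp add: coroot_def orth_def linear_scale[OF l])
qed

lemma coroot_coroot: "a \<noteq> 0 \<Longrightarrow> coroot (coroot a) = (a::'a::real_inner)"
  by (simp add: coroot_def field_simps)

lemma coroot_neg: "coroot (- a) = - coroot (a::'a::real_inner)"
  by (simp add: coroot_def)

lemma coroot_zero_iff: "coroot a = 0 \<longleftrightarrow> (a::'a::real_inner) = 0"
  by (simp add: coroot_def)

lemma coroot_inner_self: "a \<noteq> 0 \<Longrightarrow> coroot a \<bullet> coroot a = 4 / (a \<bullet> (a::'a::real_inner))"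
  by (simp add: coroot_def field_simps power2_eq_square)

lemma refl_coroot: "refl (coroot a) = refl (a::'a::real_inner)"
proof (cases "a = 0")
  case True then show ?thesis by (simp add: coroot_def)
next
  case False
  then have aa: "a \<bullet> a \<noteq> 0" by simp
  show ?thesis
    by (rule ext) (use aa in \<open>simp add: refl_def coroot_def field_simps\<close>)
qed

lemma word_map_append: "word_map (xs @ ys) = word_map xs \<circ> word_map ys"
  by (induction xs) auto

lemma word_map_rev1: "word_map (rev ws) (word_map ws x) = x"
  by (induction ws arbitrary: x) (auto simp: word_map_append)

lemma word_map_rev2: "word_map ws (word_map (rev ws) x) = x"
  using word_map_rev1[of "rev ws" x] by simp

lemma word_map_inj: "inj (word_map ws)"
  by (metis injI word_map_rev1)

lemma gen_group_id: "id \<in> gen_group S"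
  unfolding gen_group_def by (auto intro: exI[of _ "[]"])

lemma gen_groupE: "w \<in> gen_group S \<Longrightarrow> (\<And>ws. set ws \<subseteq> S \<Longrightarrow> w = word_map ws \<Longrightarrow> thesis) \<Longrightarrow> thesis"
  unfolding gen_group_def by blast

lemma gen_groupI: "set ws \<subseteq> S \<Longrightarrow> word_map ws \<in> gen_group S"
  unfolding gen_group_def by blast

lemma gen_group_comp: "u \<in> gen_group S \<Longrightarrow> v \<in> gen_group S \<Longrightarrow> u \<circ> v \<in> gen_group S"
  by (metis gen_groupE gen_groupI set_append Un_subset_iff word_map_append)

lemma gen_group_refl: "a \<in> S \<Longrightarrow> refl a \<in> gen_group S"
  using gen_groupI[of "[a]" S] by simp

lemma gen_group_inv: "u \<in> gen_group S \<Longrightarrow> \<exists>u'\<in>gen_group S. (\<forall>x. u' (u x) = x) \<and> (\<forall>x. u (u' x) = x)"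
  by (metis gen_groupE gen_groupI set_rev word_map_rev1 word_map_rev2)

lemma gen_group_orth: "u \<in> gen_group S \<Longrightarrow> orth u"
  by (metis gen_groupE orth_word_map)

lemma gen_group_mono: "S \<subseteq> T \<Longrightarrow> gen_group S \<subseteq> gen_group T"
  unfolding gen_group_def by blast


locale RS =
  fixes R Sm :: "'a::euclidean_space set"
  assumes rs: "root_system R" and base: "is_base R Sm"
begin

lemma finR: "finite R" using rs by (simp add: root_system_def)
lemma zR: "0 \<notin> R" using rs by (simp add: root_system_def)
lemma spanR: "span R = UNIV" using rs by (simp add: root_system_def)
lemma reflR: "a \<in> R \<Longrightarrow> b \<in> R \<Longrightarrow> refl a b \<in> R" using rs by (auto simp: root_system_def)
lemma cryst: "a \<in> R \<Longrightarrow> b \<in> R \<Longrightarrow> 2 * (b \<bullet> a) / (a \<bullet> a) \<in> \<int>" using rs by (simp add: root_system_def)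
lemma reduced: "a \<in> R \<Longrightarrow> c *\<^sub>R a \<in> R \<Longrightarrow> c = 1 \<or> c = -1" using rs by (simp add: root_system_def)
lemma SmR: "Sm \<subseteq> R" using base by (simp add: is_base_def)
lemma indep: "independent Sm" using base by (simp add: is_base_def)
lemma finSm: "finite Sm" using SmR finR finite_subset by blast
lemma nn_root: "a \<in> R \<Longrightarrow> nn_comb Sm a \<or> nn_comb Sm (- a)" using base by (simp add: is_base_def)
lemma negR: "a \<in> R \<Longrightarrow> - a \<in> R" using reflR[of a a] by (simp add: refl_self)
lemma nzR: "a \<in> R \<Longrightarrow> a \<noteq> 0" using zR by auto
lemma nzSm: "a \<in> Sm \<Longrightarrow> a \<noteq> 0" using zR SmR by auto
lemma inner_pos: "a \<in> R \<Longrightarrow> a \<bullet> a > 0" using nzR by simp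

lemma Nats_ge0: "(x::real) \<in> \<nat> \<Longrightarrow> 0 \<le> x" by (auto elim: Nats_cases)

lemma nn_comb_span: "nn_comb Sm v \<Longrightarrow> v \<in> span Sm"
proof -
  assume "nn_comb Sm v"
  then obtain c :: "'a \<Rightarrow> nat" where v: "v = (\<Sum>b\<in>Sm. of_nat (c b) *\<^sub>R b)" by (auto simp: nn_comb_def)
  have "(\<Sum>b\<in>Sm. of_nat (c b) *\<^sub>R b) \<in> span Sm"
    by (rule span_sum, rule span_scale, rule span_base)
  then show ?thesis using v by simp
qed

lemma spanSm: "span Sm = UNIV"
proof -
  have "R \<subseteq> span Sm"
  proof
    fix a assume "a \<in> R"
    then show "a \<in> span Sm" using nn_root[of a] nn_comb_span span_neg[of "-a" Sm] by auto
  qed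
  then have "span R \<subseteq> span Sm" by (simp add: span_minimal)
  then show ?thesis using spanR by auto
qed

definition cf :: "'a \<Rightarrow> 'a \<Rightarrow> real" where "cf b v = representation Sm v b"

lemma cf_add: "cf b (x + y) = cf b x + cf b y"
  unfolding cf_def using representation_add[OF indep, of y x] spanSm by simp
lemma cf_diff: "cf b (x - y) = cf b x - cf b y"
  unfolding cf_def using representation_diff[OF indep, of y x] spanSm by simp
lemma cf_neg: "cf b (- x) = - cf b x"
  unfolding cf_def using representation_neg[OF indep, of x] spanSm by simp
lemma cf_scale: "cf b (c *\<^sub>R x) = c * cf b x"
  unfolding cf_def using representation_scale[OF indep, of x c] spanSm by simp
lemma cf_zero: "cf b 0 = 0"
  unfolding cf_def by (simp add: representation_zero)
lemma cf_sum: "cf b (sum f I) = (\<Sum>i\<in>I. cf b (f i))"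
  unfolding cf_def using representation_sum[OF indep, of I f] spanSm by simp
lemma cf_expand: "(\<Sum>b\<in>Sm. cf b v *\<^sub>R b) = v"
  unfolding cf_def using sum_representation_eq[OF indep, of v Sm] spanSm finSm by simp
lemma cf_basis: "b \<in> Sm \<Longrightarrow> cf c b = (if c = b then 1 else 0)"
  unfolding cf_def using representation_basis[OF indep] by simp
lemma cf_outside: "c \<notin> Sm \<Longrightarrow> cf c v = 0"
  unfolding cf_def using representation_ne_zero by blast
lemma cf_linear: "linear (cf b)"
  by (rule linearI) (simp_all add: cf_add cf_scale)

lemma cf_comb: "c \<in> Sm \<Longrightarrow> cf c (\<Sum>b\<in>Sm. f b *\<^sub>R b) = f c"
proof -
  assume c: "c \<in> Sm"
  have "cf c (\<Sum>b\<in>Sm. f b *\<^sub>R b) = (\<Sum>b\<in>Sm. f b * (if c = b then 1 else 0))"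
    by (simp add: cf_sum cf_scale cf_basis)
  also have "\<dots> = f c" using c finSm by (simp add: if_distrib cong: if_cong)
  finally show ?thesis .
qed

lemma cf_eq0: "(\<And>b. b \<in> Sm \<Longrightarrow> cf b v = 0) \<Longrightarrow> v = 0"
  using cf_expand[of v] by simp

lemma cf_ext: "(\<And>b. b \<in> Sm \<Longrightarrow> cf b v = cf b w) \<Longrightarrow> v = w"
  using cf_eq0[of "v - w"] by (simp add: cf_diff)

lemma nn_comb_iff: "nn_comb Sm v \<longleftrightarrow> (\<forall>b\<in>Sm. cf b v \<in> \<nat>)"
proof
  assume "nn_comb Sm v"
  then obtain c :: "'a \<Rightarrow> nat" where v: "v = (\<Sum>b\<in>Sm. of_nat (c b) *\<^sub>R b)" by (auto simp: nn_comb_def)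
  show "\<forall>b\<in>Sm. cf b v \<in> \<nat>" using cf_comb v by auto
next
  assume h: "\<forall>b\<in>Sm. cf b v \<in> \<nat>"
  define c where "c b = nat \<lfloor>cf b v\<rfloor>" for b
  have "\<forall>b\<in>Sm. of_nat (c b) = cf b v"
    using h unfolding c_def by (auto elim!: Nats_cases)
  then have "v = (\<Sum>b\<in>Sm. of_nat (c b) *\<^sub>R b)" using cf_expand[of v] by (auto intro: sum.cong)
  then show "nn_comb Sm v" unfolding nn_comb_def by blast
qed

abbreviation P where "P \<equiv> pos_roots R Sm"

lemma root_nat: "a \<in> R \<Longrightarrow> (\<forall>b\<in>Sm. cf b a \<in> \<nat>) \<or> (\<forall>b\<in>Sm. - cf b a \<in> \<nat>)"
  using nn_root[of a] by (simp add: nn_comb_iff cf_neg)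

lemma root_int: "a \<in> R \<Longrightarrow> cf b a \<in> \<int>"
proof (cases "b \<in> Sm")
  case True
  assume a: "a \<in> R"
  then show ?thesis using root_nat[OF a] True
    by (metis Ints_minus Nats_subset_Ints minus_minus subsetD)
qed (simp add: cf_outside)

lemma pos_iff: "a \<in> P \<longleftrightarrow> a \<in> R \<and> (\<forall>b\<in>Sm. 0 \<le> cf b a)"
proof
  assume "a \<in> P" then show "a \<in> R \<and> (\<forall>b\<in>Sm. 0 \<le> cf b a)"
    by (auto simp: pos_roots_def nn_comb_iff Nats_altdef2)
next
  assume h: "a \<in> R \<and> (\<forall>b\<in>Sm. 0 \<le> cf b a)"
  have "\<forall>b\<in>Sm. cf b a \<in> \<nat>"
  proof (cases "\<forall>b\<in>Sm. cf b a \<in> \<nat>")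
    case False
    then have n: "\<forall>b\<in>Sm. - cf b a \<in> \<nat>" using root_nat h by blast
    have "\<forall>b\<in>Sm. cf b a = 0"
    proof
      fix b assume "b \<in> Sm"
      then have "- cf b a \<ge> 0" using n Nats_ge0 by blast
      then show "cf b a = 0" using h \<open>b \<in> Sm\<close> by fastforce
    qed
    then show ?thesis by simp
  qed
  then show "a \<in> P" using h by (simp add: pos_roots_def nn_comb_iff)
qed

lemma PR: "a \<in> P \<Longrightarrow> a \<in> R" by (simp add: pos_iff)

lemma root_sign: assumes a: "a \<in> R" shows "a \<in> P \<or> - a \<in> P"
proof (cases "\<forall>b\<in>Sm. cf b a \<in> \<nat>")
  case True
  then show ?thesis using a by (auto simp: pos_iff Nats_altdef2)
next
  case False
  then have "\<forall>b\<in>Sm. - cf b a \<in> \<nat>" using root_nat[OF a] by blast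
  then show ?thesis using negR[OF a] by (auto simp: pos_iff Nats_altdef2 cf_neg)
qed

lemma pos_not_neg: "a \<in> P \<Longrightarrow> - a \<notin> P"
proof
  assume a: "a \<in> P" "- a \<in> P"
  then have "\<forall>b\<in>Sm. cf b a = 0" by (fastforce simp: pos_iff cf_neg)
  then have "a = 0" using cf_eq0 by blast
  then show False using a PR zR by auto
qed

lemma notP_iff: "a \<in> R \<Longrightarrow> a \<notin> P \<longleftrightarrow> - a \<in> P"
  using root_sign pos_not_neg by blast

lemma pos_of_coord: "a \<in> R \<Longrightarrow> cf b a > 0 \<Longrightarrow> a \<in> P"
  using root_sign[of a] by (cases "b \<in> Sm") (auto simp: pos_iff cf_neg cf_outside)

lemma neg_of_coord: "a \<in> R \<Longrightarrow> cf b a < 0 \<Longrightarrow> a \<notin> P"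
  by (cases "b \<in> Sm") (force simp: pos_iff cf_outside)+

lemma Sm_pos: "a \<in> Sm \<Longrightarrow> a \<in> P"
  using SmR by (auto simp: pos_iff cf_basis)

lemma cf_nonneg_pos: "a \<in> R \<Longrightarrow> (\<And>b. b \<in> Sm \<Longrightarrow> cf b a \<ge> 0) \<Longrightarrow> a \<in> P"
  by (simp add: pos_iff)

lemma cf_nonpos_neg: "a \<in> R \<Longrightarrow> (\<And>b. b \<in> Sm \<Longrightarrow> cf b a \<le> 0) \<Longrightarrow> a \<notin> P"
  using cf_nonneg_pos[of "-a"] negR notP_iff by (force simp: cf_neg)

lemma pos_nonzero_coord: "a \<in> P \<Longrightarrow> \<exists>b\<in>Sm. cf b a > 0"
proof (rule ccontr)
  assume a: "a \<in> P" and "\<not> (\<exists>b\<in>Sm. cf b a > 0)"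
  then have "\<forall>b\<in>Sm. cf b a = 0" by (force simp: pos_iff)
  then show False using cf_eq0[of a] a PR zR by auto
qed

lemma refl_simple_pos: assumes a: "a \<in> Sm" and b: "\<beta> \<in> P" and ne: "\<beta> \<noteq> a"
  shows "refl a \<beta> \<in> P"
proof -
  have aR: "a \<in> R" using a SmR by auto
  have bR: "\<beta> \<in> R" using b PR by auto
  have rR: "refl a \<beta> \<in> R" using reflR aR bR by auto
  have coord: "cf c (refl a \<beta>) = cf c \<beta> - (2 * (\<beta> \<bullet> a) / (a \<bullet> a)) * cf c a" for c
    by (simp add: refl_def cf_diff cf_scale)
  show ?thesis
  proof (cases "\<exists>c\<in>Sm - {a}. cf c \<beta> \<noteq> 0")
    case True
    then obtain c where c: "c \<in> Sm" "c \<noteq> a" "cf c \<beta> \<noteq> 0" by auto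
    then have "cf c \<beta> > 0" using b by (force simp: pos_iff)
    then have "cf c (refl a \<beta>) > 0" using coord[of c] c a by (simp add: cf_basis)
    then show ?thesis using pos_of_coord rR by blast
  next
    case False
    have "\<beta> = (\<Sum>c\<in>Sm. cf c \<beta> *\<^sub>R c)" by (simp add: cf_expand)
    also have "\<dots> = (\<Sum>c\<in>Sm. (if c = a then cf a \<beta> *\<^sub>R a else 0))"
      using False by (intro sum.cong) auto
    also have "\<dots> = cf a \<beta> *\<^sub>R a" using a finSm by simp
    finally have eq: "\<beta> = cf a \<beta> *\<^sub>R a" .
    then have "cf a \<beta> = 1 \<or> cf a \<beta> = -1" using reduced[OF aR] bR by metis
    moreover have "cf a \<beta> \<ge> 0" using b a by (simp add: pos_iff)
    ultimately have "cf a \<beta> = 1" by auto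
    then have "\<beta> = a" using eq by simp
    then show ?thesis using ne by simp
  qed
qed

lemma refl_simple_char: assumes a: "a \<in> Sm" and b: "\<beta> \<in> R"
  shows "refl a \<beta> \<in> P \<longleftrightarrow> (\<beta> \<in> P \<and> \<beta> \<noteq> a) \<or> \<beta> = - a"
proof -
  have aR: "a \<in> R" using a SmR by auto
  have aP: "a \<in> P" using Sm_pos a by auto
  show ?thesis
  proof (cases "\<beta> \<in> P")
    case True
    have "a + a \<noteq> 0" using nzSm[OF a] by (metis scaleR_2 scaleR_eq_0_iff zero_neq_numeral)
    then have "a \<noteq> - a" by (metis add.right_inverse)
    then show ?thesis using refl_simple_pos[OF a True] refl_self[of a] pos_not_neg[OF aP] pos_not_neg[OF True] True
      by (cases "\<beta> = a") auto
  next
    case False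
    then have nb: "- \<beta> \<in> P" using notP_iff b by auto
    show ?thesis
    proof (cases "- \<beta> = a")
      case True
      then have "\<beta> = - a" by auto
      then show ?thesis using refl_self[of a] refl_neg_arg[of a a] aP by simp
    next
      case ne: False
      have "refl a (- \<beta>) \<in> P" using refl_simple_pos[OF a nb ne] .
      then have "refl a \<beta> \<notin> P" by (metis pos_not_neg refl_neg_arg minus_minus)
      then show ?thesis using False ne by auto
    qed
  qed
qed

end


context RS begin

abbreviation W where "W \<equiv> gen_group Sm"

definition invs :: "('a \<Rightarrow> 'a) \<Rightarrow> 'a set" where "invs w = {\<beta>\<in>P. w \<beta> \<notin> P}"
definition nI :: "('a \<Rightarrow> 'a) \<Rightarrow> nat" where "nI w = card (invs w)"

lemma finP: "finite P" using finR by (rule finite_subset[rotated]) (auto simp: pos_roots_def)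
lemma fin_invs: "finite (invs w)" using finP by (simp add: invs_def)

lemma word_R: "set ws \<subseteq> R \<Longrightarrow> \<beta> \<in> R \<Longrightarrow> word_map ws \<beta> \<in> R"
  by (induction ws arbitrary: \<beta>) (auto intro: reflR)

lemma gg_R: "S \<subseteq> R \<Longrightarrow> w \<in> gen_group S \<Longrightarrow> \<beta> \<in> R \<Longrightarrow> w \<beta> \<in> R"
  by (metis gen_groupE order_trans word_R)

lemma W_R: "w \<in> gen_group S \<Longrightarrow> S \<subseteq> Sm \<Longrightarrow> \<beta> \<in> R \<Longrightarrow> w \<beta> \<in> R"
  using gg_R SmR by blast

lemma gg_linear: "w \<in> gen_group S \<Longrightarrow> linear w"
  using gen_group_orth orth_linear by blast

lemma gg_inj: "w \<in> gen_group S \<Longrightarrow> inj w"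
  by (metis gen_groupE word_map_inj)

lemma gg_image: assumes "S \<subseteq> R" "w \<in> gen_group S" shows "w ` R = R"
proof -
  have sub: "w ` R \<subseteq> R" using gg_R assms by blast
  have "card (w ` R) = card R" using gg_inj[OF assms(2)] by (simp add: card_image inj_on_subset)
  then show ?thesis using card_subset_eq[OF finR sub] by simp
qed

lemma gg_surj: "S \<subseteq> R \<Longrightarrow> w \<in> gen_group S \<Longrightarrow> \<beta> \<in> R \<Longrightarrow> \<exists>\<gamma>\<in>R. w \<gamma> = \<beta>"
  using gg_image by (metis imageE)

lemma refl_img_iff: "\<beta> \<in> refl a ` X \<longleftrightarrow> refl a \<beta> \<in> X"
  by (metis image_iff refl_refl)

lemma invs_right: assumes a: "a \<in> Sm" and wR: "\<forall>\<beta>\<in>R. w \<beta> \<in> R" and lw: "linear w"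
  shows "invs (w \<circ> refl a) = (if w a \<in> P then {a} else {}) \<union> refl a ` (invs w - {a})"
proof (rule set_eqI)
  fix \<beta>
  have aR: "a \<in> R" using a SmR by auto
  have aP: "a \<in> P" using a Sm_pos by auto
  have naP: "- a \<notin> P" using pos_not_neg aP by auto
  have waR: "w a \<in> R" using wR aR by auto
  show "\<beta> \<in> invs (w \<circ> refl a) \<longleftrightarrow> \<beta> \<in> (if w a \<in> P then {a} else {}) \<union> refl a ` (invs w - {a})"
  proof (cases "\<beta> = a")
    case True
    have "w (refl a a) = - w a" by (simp add: refl_self linear_neg[OF lw])
    then have "w (refl a a) \<notin> P \<longleftrightarrow> w a \<in> P" using notP_iff[OF waR] by (metis minus_minus negR notP_iff waR)
    moreover have "refl a a \<notin> invs w" using naP by (simp add: refl_self invs_def)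
    ultimately show ?thesis using True aP by (auto simp: invs_def refl_img_iff)
  next
    case False
    show ?thesis
    proof (cases "\<beta> \<in> R")
      case bR: True
      have r1: "refl a \<beta> \<in> P \<longleftrightarrow> (\<beta> \<in> P \<and> \<beta> \<noteq> a) \<or> \<beta> = - a" using refl_simple_char[OF a bR] .
      have r2: "refl a \<beta> = a \<longleftrightarrow> \<beta> = - a" by (metis refl_refl refl_self refl_neg_arg minus_minus)
      show ?thesis using False r1 r2 naP by (auto simp: invs_def refl_img_iff)
    next
      case bR: False
      have "refl a \<beta> \<notin> R" using bR reflR[OF aR] by (metis refl_refl)
      then show ?thesis using False bR by (auto simp: invs_def refl_img_iff pos_roots_def)
    qed
  qed
qed

lemma nI_right: assumes a: "a \<in> Sm" and wR: "\<forall>\<beta>\<in>R. w \<beta> \<in> R" and lw: "linear w"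
  shows "nI (w \<circ> refl a) = (if w a \<in> P then Suc (nI w) else nI w - 1)"
    and "w a \<notin> P \<Longrightarrow> a \<in> invs w"
proof -
  have aP: "a \<in> P" using a Sm_pos by auto
  show "w a \<notin> P \<Longrightarrow> a \<in> invs w" using aP by (simp add: invs_def)
  have inj: "inj_on (refl a) X" for X by (metis inj_onI refl_refl)
  have na: "a \<notin> refl a ` X" if "X \<subseteq> P" for X
    using that pos_not_neg[OF aP] by (auto simp: refl_img_iff refl_self)
  show "nI (w \<circ> refl a) = (if w a \<in> P then Suc (nI w) else nI w - 1)"
  proof (cases "w a \<in> P")
    case True
    have "nI (w \<circ> refl a) = card (insert a (refl a ` (invs w - {a})))"
      using invs_right[OF a wR lw] True by (simp add: nI_def)
    also have "\<dots> = Suc (card (refl a ` (invs w - {a})))"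
      using na[of "invs w - {a}"] fin_invs by (intro card_insert_disjoint) (auto simp: invs_def)
    also have "card (refl a ` (invs w - {a})) = card (invs w - {a})" using card_image[OF inj] by simp
    also have "invs w - {a} = invs w" using True by (auto simp: invs_def)
    finally show ?thesis using True by (simp add: nI_def o_def)
  next
    case False
    have "nI (w \<circ> refl a) = card (refl a ` (invs w - {a}))"
      using invs_right[OF a wR lw] False by (simp add: nI_def)
    also have "\<dots> = card (invs w - {a})" using card_image[OF inj] by simp
    also have "\<dots> = nI w - 1" using False aP fin_invs by (simp add: nI_def invs_def)
    finally show ?thesis using False by simp
  qed
qed

lemma W_props: "w \<in> gen_group S \<Longrightarrow> S \<subseteq> Sm \<Longrightarrow> (\<forall>\<beta>\<in>R. w \<beta> \<in> R) \<and> linear w"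
  using W_R gg_linear by blast

lemma deletion: "set xs \<subseteq> Sm \<Longrightarrow> a \<in> Sm \<Longrightarrow> word_map xs a \<notin> P \<Longrightarrow>
   \<exists>ys. length ys < length xs \<and> set ys \<subseteq> set xs \<and> word_map (xs @ [a]) = word_map ys"
proof (induction xs)
  case Nil
  then show ?case using Sm_pos by simp
next
  case (Cons x xs)
  have x: "x \<in> Sm" and xs: "set xs \<subseteq> Sm" using Cons.prems by auto
  show ?case
  proof (cases "word_map xs a \<in> P")
    case False
    then obtain ys where ys: "length ys < length xs" "set ys \<subseteq> set xs" "word_map (xs @ [a]) = word_map ys"
      using Cons.IH xs Cons.prems by blast
    show ?thesis
      by (rule exI[of _ "x # ys"]) (use ys in auto)
  next
    case True
    have aR: "a \<in> R" using Cons.prems SmR by auto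
    have vR: "word_map xs a \<in> R" using word_R xs SmR aR by auto
    have "refl x (word_map xs a) \<notin> P" using Cons.prems by simp
    then have eq: "word_map xs a = x" using refl_simple_char[OF x vR] True by auto
    have "word_map (x # xs @ [a]) = word_map xs"
    proof
      fix y
      have "word_map (x # xs @ [a]) y = refl x (word_map xs (refl a y))" by (simp add: word_map_append)
      also have "word_map xs (refl a y) = refl (word_map xs a) (word_map xs y)"
        using refl_conj[OF orth_word_map] by metis
      finally show "word_map (x # xs @ [a]) y = word_map xs y" using eq by simp
    qed
    then show ?thesis by (intro exI[of _ xs]) auto
  qed
qed

lemma nI_le_len: "set ws \<subseteq> Sm \<Longrightarrow> nI (word_map ws) \<le> length ws"
proof (induction ws rule: rev_induct)
  case Nil
  then show ?case by (simp add: nI_def invs_def)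
next
  case (snoc a xs)
  have p: "(\<forall>\<beta>\<in>R. word_map xs \<beta> \<in> R) \<and> linear (word_map xs)"
    using W_props[OF gen_groupI[of xs Sm]] snoc.prems by auto
  have "nI (word_map (xs @ [a])) = nI (word_map xs \<circ> refl a)" by (simp add: word_map_append)
  also have "\<dots> \<le> Suc (nI (word_map xs))" using nI_right(1)[of a "word_map xs"] p snoc.prems by auto
  finally show ?case using snoc by auto
qed

lemma reduced_nI: "S \<subseteq> Sm \<Longrightarrow> set ws \<subseteq> S \<Longrightarrow>
  (\<forall>ys. set ys \<subseteq> S \<and> word_map ys = word_map ws \<longrightarrow> length ws \<le> length ys) \<Longrightarrow> nI (word_map ws) = length ws"
proof (induction ws rule: rev_induct)
  case Nil
  then show ?case by (simp add: nI_def invs_def)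
next
  case (snoc a xs)
  have aS: "a \<in> S" and xsS: "set xs \<subseteq> S" using snoc.prems by auto
  have a: "a \<in> Sm" using aS snoc.prems by auto
  have xsSm: "set xs \<subseteq> Sm" using xsS snoc.prems by auto
  have red: "\<forall>ys. set ys \<subseteq> S \<and> word_map ys = word_map xs \<longrightarrow> length xs \<le> length ys"
  proof (intro allI impI)
    fix ys assume ys: "set ys \<subseteq> S \<and> word_map ys = word_map xs"
    then have "set (ys @ [a]) \<subseteq> S \<and> word_map (ys @ [a]) = word_map (xs @ [a])"
      using aS by (simp add: word_map_append)
    then show "length xs \<le> length ys" using snoc.prems(3) by fastforce
  qed
  have IH: "nI (word_map xs) = length xs" using snoc.IH snoc.prems(1) xsS red by blast
  have p: "(\<forall>\<beta>\<in>R. word_map xs \<beta> \<in> R) \<and> linear (word_map xs)"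
    using W_props[OF gen_groupI[of xs Sm]] xsSm by auto
  have pos: "word_map xs a \<in> P"
  proof (rule ccontr)
    assume "word_map xs a \<notin> P"
    then obtain ys where ys: "length ys < length xs" "set ys \<subseteq> set xs" "word_map (xs @ [a]) = word_map ys"
      using deletion xsSm a by blast
    then show False using snoc.prems(3)[rule_format, of ys] xsS by fastforce
  qed
  have "nI (word_map (xs @ [a])) = nI (word_map xs \<circ> refl a)" by (simp add: word_map_append)
  also have "\<dots> = Suc (nI (word_map xs))" using nI_right(1)[OF a] p pos by auto
  finally show ?case using IH by simp
qed

lemma word_len_eq: assumes S: "S \<subseteq> Sm" and w: "w \<in> gen_group S"
  shows "word_len S w = nI w"
proof -
  let ?Q = "\<lambda>k. \<exists>ws. set ws \<subseteq> S \<and> length ws = k \<and> word_map ws = w"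
  obtain ws0 where "set ws0 \<subseteq> S" "w = word_map ws0" using w by (rule gen_groupE)
  then have ex: "?Q (length ws0)" by blast
  obtain ws where ws: "set ws \<subseteq> S" "length ws = word_len S w" "word_map ws = w"
    using LeastI_ex[of ?Q] ex unfolding word_len_def by blast
  have red: "\<forall>ys. set ys \<subseteq> S \<and> word_map ys = word_map ws \<longrightarrow> length ws \<le> length ys"
    using ws unfolding word_len_def by (auto intro: Least_le)
  have "nI (word_map ws) = length ws" using reduced_nI[OF S ws(1) red] .
  then show ?thesis using ws by simp
qed

lemma nI_zero_id: assumes S: "S \<subseteq> Sm" and w: "w \<in> gen_group S" and n: "nI w = 0"
  shows "w = id"
proof -
  let ?Q = "\<lambda>k. \<exists>ws. set ws \<subseteq> S \<and> length ws = k \<and> word_map ws = w"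
  obtain ws0 where "set ws0 \<subseteq> S" "w = word_map ws0" using w by (rule gen_groupE)
  then have ex: "?Q (length ws0)" by blast
  have "word_len S w = 0" using word_len_eq[OF S w] n by simp
  then obtain ws where ws: "length ws = 0" "word_map ws = w"
    using LeastI_ex[of ?Q] ex unfolding word_len_def by auto
  then show ?thesis by simp
qed

lemma pos_preserve: assumes lw: "linear w" and b: "\<beta> \<in> P" and wb: "w \<beta> \<in> R"
  and h: "\<And>c. c \<in> Sm \<Longrightarrow> cf c \<beta> \<noteq> 0 \<Longrightarrow> w c \<in> P"
  shows "w \<beta> \<in> P"
proof (rule cf_nonneg_pos[OF wb])
  fix d assume d: "d \<in> Sm"
  have "w \<beta> = w (\<Sum>c\<in>Sm. cf c \<beta> *\<^sub>R c)" by (simp add: cf_expand)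
  also have "\<dots> = (\<Sum>c\<in>Sm. cf c \<beta> *\<^sub>R w c)" by (simp add: linear_sum[OF lw] linear_scale[OF lw])
  finally have "cf d (w \<beta>) = (\<Sum>c\<in>Sm. cf c \<beta> * cf d (w c))" by (simp add: cf_sum cf_scale)
  also have "\<dots> \<ge> 0"
  proof (rule sum_nonneg)
    fix c assume c: "c \<in> Sm"
    show "0 \<le> cf c \<beta> * cf d (w c)"
    proof (cases "cf c \<beta> = 0")
      case False
      then have "w c \<in> P" using h c by auto
      then show ?thesis using b c d by (simp add: pos_iff)
    qed simp
  qed
  finally show "0 \<le> cf d (w \<beta>)" .
qed

lemma exists_simple_inv: assumes w: "w \<in> gen_group S" "S \<subseteq> Sm" and n: "nI w \<noteq> 0"
  shows "\<exists>a\<in>Sm. w a \<notin> P"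
proof (rule ccontr)
  assume "\<not> ?thesis"
  then have h: "\<forall>a\<in>Sm. w a \<in> P" by auto
  have "invs w = {}"
  proof -
    have "w \<beta> \<in> P" if "\<beta> \<in> P" for \<beta>
      using pos_preserve[OF gg_linear[OF w(1)] that] W_R[OF w] PR that h by blast
    then show ?thesis by (auto simp: invs_def)
  qed
  then show False using n by (simp add: nI_def)
qed

lemma inv_determines: "u \<in> W \<Longrightarrow> v \<in> W \<Longrightarrow> invs u = invs v \<Longrightarrow> u = v"
proof (induction "nI u" arbitrary: u v rule: less_induct)
  case less
  show ?case
  proof (cases "nI u = 0")
    case True
    then have "nI v = 0" using less.prems by (simp add: nI_def)
    then show ?thesis using True nI_zero_id less.prems by blast
  next
    case False
    then obtain a where a: "a \<in> Sm" "u a \<notin> P" using exists_simple_inv less.prems by blast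
    have aP: "a \<in> P" using a Sm_pos by auto
    have "a \<in> invs u" using aP a(2) by (simp add: invs_def)
    then have "a \<in> invs v" using less.prems(3) by simp
    then have va: "v a \<notin> P" by (simp add: invs_def)
    have pu: "(\<forall>\<beta>\<in>R. u \<beta> \<in> R) \<and> linear u" using W_props less.prems(1) by blast
    have pv: "(\<forall>\<beta>\<in>R. v \<beta> \<in> R) \<and> linear v" using W_props less.prems(2) by blast
    have eu: "invs (u \<circ> refl a) = refl a ` (invs u - {a})"
      using invs_right[OF a(1), of u] pu a(2) by simp
    have ev: "invs (v \<circ> refl a) = refl a ` (invs v - {a})"
      using invs_right[OF a(1), of v] pv va by simp
    have e: "invs (u \<circ> refl a) = invs (v \<circ> refl a)" using eu ev less.prems(3) by simp
    have lt: "nI (u \<circ> refl a) < nI u" using nI_right(1)[OF a(1), of u] pu a(2) False by simp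
    have m1: "u \<circ> refl a \<in> W" using gen_group_comp[OF less.prems(1) gen_group_refl[OF a(1)]] .
    have m2: "v \<circ> refl a \<in> W" using gen_group_comp[OF less.prems(2) gen_group_refl[OF a(1)]] .
    have "u \<circ> refl a = v \<circ> refl a" using less.hyps[OF lt m1 m2 e] .
    then have "u \<circ> refl a \<circ> refl a = v \<circ> refl a \<circ> refl a" by simp
    then show ?thesis by (simp add: comp_assoc)
  qed
qed

lemma sum_cf_simple: "a \<in> Sm \<Longrightarrow> (\<Sum>b\<in>Sm. cf b a) = 1"
  using finSm by (simp add: cf_basis)

lemma pos_conj_simple_aux:
  "\<forall>\<beta>\<in>P. (\<Sum>b\<in>Sm. cf b \<beta>) \<le> real n \<longrightarrow> (\<exists>ws a. set ws \<subseteq> Sm \<and> a \<in> Sm \<and> \<beta> = word_map ws a)"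
proof (induction n)
  case 0
  show ?case
  proof (intro ballI impI)
    fix \<beta> assume b: "\<beta> \<in> P" and h: "(\<Sum>b\<in>Sm. cf b \<beta>) \<le> real 0"
    have nn: "\<forall>b\<in>Sm. 0 \<le> cf b \<beta>" using b by (simp add: pos_iff)
    have "\<forall>b\<in>Sm. cf b \<beta> = 0"
      using h nn sum_nonneg_eq_0_iff[OF finSm, of "\<lambda>b. cf b \<beta>"] sum_nonneg[of Sm "\<lambda>b. cf b \<beta>"] by force
    then have "\<beta> = 0" using cf_eq0 by blast
    then show "\<exists>ws a. set ws \<subseteq> Sm \<and> a \<in> Sm \<and> \<beta> = word_map ws a" using b PR zR by auto
  qed
next
  case (Suc n)
  show ?case
  proof (intro ballI impI)
    fix \<beta> assume b: "\<beta> \<in> P" and h: "(\<Sum>b\<in>Sm. cf b \<beta>) \<le> real (Suc n)"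
    show "\<exists>ws a. set ws \<subseteq> Sm \<and> a \<in> Sm \<and> \<beta> = word_map ws a"
    proof (cases "\<beta> \<in> Sm")
      case True
      then show ?thesis by (intro exI[of _ "[]"] exI[of _ \<beta>]) auto
    next
      case False
      have bR: "\<beta> \<in> R" using b PR by auto
      have nn: "\<forall>b\<in>Sm. 0 \<le> cf b \<beta>" using b by (simp add: pos_iff)
      have "\<beta> \<bullet> \<beta> = (\<Sum>c\<in>Sm. cf c \<beta> *\<^sub>R c) \<bullet> \<beta>" by (simp add: cf_expand)
      also have "\<dots> = (\<Sum>c\<in>Sm. cf c \<beta> * (c \<bullet> \<beta>))" by (simp add: inner_sum_left)
      finally have bb: "\<beta> \<bullet> \<beta> = (\<Sum>c\<in>Sm. cf c \<beta> * (c \<bullet> \<beta>))" .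
      have "\<exists>a\<in>Sm. a \<bullet> \<beta> > 0"
      proof (rule ccontr)
        assume na: "\<not> ?thesis"
        have "\<forall>c\<in>Sm. cf c \<beta> * (c \<bullet> \<beta>) \<le> 0"
        proof
          fix c assume c: "c \<in> Sm"
          have "\<not> (0 < c \<bullet> \<beta>)" using na c by blast
          then have "c \<bullet> \<beta> \<le> 0" by linarith
          then show "cf c \<beta> * (c \<bullet> \<beta>) \<le> 0" using nn c by (intro mult_nonneg_nonpos) auto
        qed
        then have "\<beta> \<bullet> \<beta> \<le> 0" using bb by (simp add: sum_nonpos)
        then show False using inner_pos[OF bR] by simp
      qed
      then obtain a where a: "a \<in> Sm" "a \<bullet> \<beta> > 0" by auto
      have aR: "a \<in> R" using a SmR by auto
      define k where "k = 2 * (\<beta> \<bullet> a) / (a \<bullet> a)"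
      have kpos: "k > 0" using a inner_pos[OF aR] by (simp add: k_def inner_commute)
      have kint: "k \<in> \<int>" using cryst[OF aR bR] by (simp add: k_def)
      obtain z where z: "k = of_int z" using kint by (auto elim: Ints_cases)
      have k1: "k \<ge> 1" using kpos z by simp
      have ne: "\<beta> \<noteq> a" using False a by auto
      have b'P: "refl a \<beta> \<in> P" using refl_simple_pos[OF a(1) b ne] .
      have "(\<Sum>c\<in>Sm. cf c (refl a \<beta>)) = (\<Sum>c\<in>Sm. cf c \<beta> - k * cf c a)"
        by (simp add: refl_def cf_diff cf_scale k_def)
      also have "\<dots> = (\<Sum>c\<in>Sm. cf c \<beta>) - k" using sum_cf_simple[OF a(1)]
        by (simp add: sum_subtractf sum_distrib_left[symmetric])
      finally have "(\<Sum>c\<in>Sm. cf c (refl a \<beta>)) \<le> real n" using h k1 by simp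
      then obtain ws a' where ws: "set ws \<subseteq> Sm" "a' \<in> Sm" "refl a \<beta> = word_map ws a'"
        using Suc.IH b'P by blast
      have "\<beta> = refl a (refl a \<beta>)" by simp
      then have "\<beta> = word_map (a # ws) a'" using ws(3) by simp
      then show ?thesis using ws a by (intro exI[of _ "a # ws"] exI[of _ a']) auto
    qed
  qed
qed

lemma root_conj_simple: assumes b: "\<beta> \<in> R"
  shows "\<exists>ws a. set ws \<subseteq> Sm \<and> a \<in> Sm \<and> \<beta> = word_map ws a"
proof -
  have pc: "\<exists>ws a. set ws \<subseteq> Sm \<and> a \<in> Sm \<and> \<gamma> = word_map ws a" if "\<gamma> \<in> P" for \<gamma>
    using pos_conj_simple_aux[of "nat \<lceil>\<Sum>b\<in>Sm. cf b \<gamma>\<rceil>"] that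
    by (meson of_nat_ceiling real_nat_ceiling_ge)
  show ?thesis
  proof (cases "\<beta> \<in> P")
    case True then show ?thesis using pc by blast
  next
    case False
    then have "- \<beta> \<in> P" using notP_iff b by auto
    then obtain ws a where ws: "set ws \<subseteq> Sm" "a \<in> Sm" "- \<beta> = word_map ws a" using pc by blast
    have lw: "linear (word_map ws)" using orth_word_map orth_linear by blast
    have "\<beta> = word_map ws (- a)" using ws(3) linear_neg[OF lw] by (metis minus_minus)
    also have "\<dots> = word_map (ws @ [a]) a" by (simp add: word_map_append refl_self)
    finally show ?thesis using ws by (intro exI[of _ "ws @ [a]"] exI[of _ a]) auto
  qed
qed

lemma refl_root_W: assumes b: "\<beta> \<in> R" shows "refl \<beta> \<in> W"
proof -
  obtain ws a where ws: "set ws \<subseteq> Sm" "a \<in> Sm" "\<beta> = word_map ws a" using root_conj_simple[OF b] by blast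
  have "refl \<beta> = word_map (ws @ [a] @ rev ws)"
  proof
    fix y
    have "word_map (ws @ [a] @ rev ws) y = word_map ws (refl a (word_map (rev ws) y))"
      by (simp add: word_map_append)
    also have "\<dots> = refl (word_map ws a) (word_map ws (word_map (rev ws) y))"
      using refl_conj[OF orth_word_map] by metis
    also have "\<dots> = refl \<beta> y" using ws(3) by (simp add: word_map_rev2)
    finally show "refl \<beta> y = word_map (ws @ [a] @ rev ws) y" by simp
  qed
  moreover have "set (ws @ [a] @ rev ws) \<subseteq> Sm" using ws by auto
  ultimately show ?thesis using gen_groupI[of "ws @ [a] @ rev ws" Sm] by simp
qed

lemma weyl_eq: "weyl R = W"
proof
  show "W \<subseteq> weyl R" unfolding weyl_def using SmR by (rule gen_group_mono)
  show "weyl R \<subseteq> W"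
  proof
    fix w assume "w \<in> weyl R"
    then obtain ws where ws: "set ws \<subseteq> R" "w = word_map ws" unfolding weyl_def by (rule gen_groupE)
    have "word_map ws \<in> W" using ws(1)
    proof (induction ws)
      case Nil then show ?case using gen_group_id[of Sm] by (simp add: id_def)
    next
      case (Cons b bs)
      have "refl b \<circ> word_map bs \<in> W" using gen_group_comp[OF refl_root_W Cons.IH] Cons.prems by simp
      then show ?case by (simp only: word_map.simps)
    qed
    then show "w \<in> W" using ws by simp
  qed
qed

end


lemma repr_eq:
  assumes fin: "finite B" and ind: "independent B" and v: "v \<in> span B"
    and f0: "\<And>x. x \<notin> B \<Longrightarrow> f x = 0" and s: "(\<Sum>x\<in>B. f x *\<^sub>R x) = v"
  shows "representation B v = f"
proof (rule representation_eqI[OF ind v])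
  show "f b \<noteq> 0 \<Longrightarrow> b \<in> B" for b using f0 by blast
  show "finite {b. f b \<noteq> 0}" using f0 fin by (metis (mono_tags) finite_subset mem_Collect_eq subsetI)
  have "(\<Sum>b | f b \<noteq> 0. f b *\<^sub>R b) = (\<Sum>x\<in>B. f x *\<^sub>R x)"
    using f0 fin by (intro sum.mono_neutral_left) auto
  then show "(\<Sum>b | f b \<noteq> 0. f b *\<^sub>R b) = v" using s by simp
qed

lemma nn_comb_repr:
  assumes fin: "finite B" and ind: "independent B" and sp: "span B = UNIV"
  shows "nn_comb B v \<longleftrightarrow> (\<forall>b\<in>B. representation B v b \<in> \<nat>)"
proof
  assume "nn_comb B v"
  then obtain c :: "'a \<Rightarrow> nat" where v: "v = (\<Sum>b\<in>B. of_nat (c b) *\<^sub>R b)" by (auto simp: nn_comb_def)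
  have "representation B v = (\<lambda>x. if x \<in> B then of_nat (c x) else 0)"
    by (rule repr_eq[OF fin ind]) (use sp v in \<open>auto intro: sum.cong\<close>)
  then show "\<forall>b\<in>B. representation B v b \<in> \<nat>" by simp
next
  assume h: "\<forall>b\<in>B. representation B v b \<in> \<nat>"
  define c where "c b = nat \<lfloor>representation B v b\<rfloor>" for b
  have "\<forall>b\<in>B. of_nat (c b) = representation B v b"
    using h unfolding c_def by (auto elim!: Nats_cases)
  then have "v = (\<Sum>b\<in>B. of_nat (c b) *\<^sub>R b)"
    using sum_representation_eq[OF ind, of v B] sp fin by (auto intro: sum.cong)
  then show "nn_comb B v" unfolding nn_comb_def by blast
qed

context RS begin

definition PS :: "'a set \<Rightarrow> 'a set" where "PS S = {\<beta>\<in>P. \<forall>b\<in>Sm - S. cf b \<beta> = 0}"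

lemma gg_cf_fix: assumes S: "S \<subseteq> Sm" and u: "u \<in> gen_group S" and b: "b \<in> Sm - S"
  shows "cf b (u v) = cf b v"
proof -
  obtain ws where ws: "set ws \<subseteq> S" "u = word_map ws" using u by (rule gen_groupE)
  have "cf b (word_map ws v) = cf b v" using ws(1)
  proof (induction ws arbitrary: v)
    case (Cons a as)
    have a: "a \<in> Sm" "a \<noteq> b" using Cons.prems S b by auto
    have "cf b (refl a (word_map as v)) = cf b (word_map as v)"
      using a by (simp add: refl_def cf_diff cf_scale cf_basis)
    then show ?case using Cons by simp
  qed simp
  then show ?thesis using ws by simp
qed

lemma gg_invs_sub: assumes S: "S \<subseteq> Sm" and u: "u \<in> gen_group S" shows "invs u \<subseteq> PS S"
proof
  fix \<beta> assume b: "\<beta> \<in> invs u"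
  then have bP: "\<beta> \<in> P" and ub: "u \<beta> \<notin> P" by (auto simp: invs_def)
  have "\<forall>c\<in>Sm - S. cf c \<beta> = 0"
  proof (rule ccontr)
    assume "\<not> ?thesis"
    then obtain c where c: "c \<in> Sm - S" "cf c \<beta> \<noteq> 0" by auto
    then have "cf c \<beta> > 0" using bP by (force simp: pos_iff)
    then have "cf c (u \<beta>) > 0" using gg_cf_fix[OF S u c(1)] by simp
    moreover have "u \<beta> \<in> R" using W_R[OF u S] bP PR by auto
    ultimately show False using pos_of_coord ub by blast
  qed
  then show "\<beta> \<in> PS S" using bP by (simp add: PS_def)
qed

lemma finPS: "finite (PS S)" by (rule finite_subset[OF _ finP]) (auto simp: PS_def)

lemma nI_le_PS: "S \<subseteq> Sm \<Longrightarrow> u \<in> gen_group S \<Longrightarrow> nI u \<le> card (PS S)"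
  unfolding nI_def by (rule card_mono[OF finPS gg_invs_sub])

lemma longest_char: assumes S: "S \<subseteq> Sm" and u: "u \<in> gen_group S" and h: "\<forall>a\<in>S. u a \<notin> P"
  shows "invs u = PS S"
proof
  show "invs u \<subseteq> PS S" using gg_invs_sub[OF S u] .
  show "PS S \<subseteq> invs u"
  proof
    fix \<beta> assume b: "\<beta> \<in> PS S"
    then have bP: "\<beta> \<in> P" by (simp add: PS_def)
    have lu: "linear u" using gg_linear[OF u] .
    have l2: "linear (\<lambda>x. - u x)" using lu by (simp add: linear_compose_neg)
    have ubR: "u \<beta> \<in> R" using W_R[OF u S] bP PR by auto
    have "(\<lambda>x. - u x) \<beta> \<in> P"
    proof (rule pos_preserve[OF l2 bP])
      show "- u \<beta> \<in> R" using negR ubR by auto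
      fix c assume c: "c \<in> Sm" "cf c \<beta> \<noteq> 0"
      then have "c \<in> S" using b by (auto simp: PS_def)
      then have "u c \<notin> P" using h by auto
      moreover have "u c \<in> R" using W_R[OF u S] c SmR by auto
      ultimately show "- u c \<in> P" using notP_iff by auto
    qed
    then have "u \<beta> \<notin> P" using pos_not_neg by force
    then show "\<beta> \<in> invs u" using bP by (simp add: invs_def)
  qed
qed

lemma longest_exists: assumes S: "S \<subseteq> Sm"
  shows "\<exists>u\<in>gen_group S. invs u = PS S"
proof -
  let ?G = "gen_group S"
  have fin: "finite (nI ` ?G)"
    by (rule finite_subset[of _ "{..card (PS S)}"]) (use nI_le_PS[OF S] in auto)
  have ne: "nI ` ?G \<noteq> {}" using gen_group_id by blast
  obtain u where u: "u \<in> ?G" "nI u = Max (nI ` ?G)" using Max_in[OF fin ne] by auto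
  have mx: "\<forall>v\<in>?G. nI v \<le> nI u" using u Max_ge[OF fin] by auto
  have "\<forall>a\<in>S. u a \<notin> P"
  proof (intro ballI notI)
    fix a assume a: "a \<in> S" "u a \<in> P"
    have aSm: "a \<in> Sm" using a S by auto
    have "nI (u \<circ> refl a) = Suc (nI u)" using nI_right(1)[OF aSm] W_props[OF u(1) S] a by simp
    moreover have "u \<circ> refl a \<in> ?G" using gen_group_comp[OF u(1) gen_group_refl[OF a(1)]] .
    ultimately show False using mx by fastforce
  qed
  then show ?thesis using longest_char[OF S u(1)] u(1) by blast
qed

lemma longest_unique: assumes S: "S \<subseteq> Sm" and u: "u \<in> gen_group S" "invs u = PS S"
  and v: "v \<in> gen_group S" "invs v = PS S" shows "u = v"
  using inv_determines gen_group_mono[OF S] u v by blast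

lemma longest_elt_props: assumes S: "S \<subseteq> Sm"
  shows "longest_elt (gen_group S) S \<in> gen_group S \<and> invs (longest_elt (gen_group S) S) = PS S"
proof -
  obtain u where u: "u \<in> gen_group S" "invs u = PS S" using longest_exists[OF S] by blast
  have "longest_elt (gen_group S) S = u"
    unfolding longest_elt_def
  proof (rule the_equality)
    show "u \<in> gen_group S \<and> (\<forall>v\<in>gen_group S. word_len S v \<le> word_len S u)"
      using u word_len_eq[OF S] nI_le_PS[OF S] by (simp add: nI_def)
    fix w assume w: "w \<in> gen_group S \<and> (\<forall>v\<in>gen_group S. word_len S v \<le> word_len S w)"
    then have "nI u \<le> nI w" using word_len_eq[OF S] u by auto
    then have "card (PS S) \<le> card (invs w)" using u by (simp add: nI_def)
    moreover have "invs w \<subseteq> PS S" using gg_invs_sub[OF S] w by auto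
    ultimately have "invs w = PS S" using finPS card_seteq by blast
    then show "w = u" using longest_unique[OF S] w u by blast
  qed
  then show ?thesis using u by simp
qed

lemma longest_invol: assumes S: "S \<subseteq> Sm" and u: "u \<in> gen_group S" "invs u = PS S"
  shows "u (u x) = x"
proof -
  have lu: "linear u" using gg_linear[OF u(1)] .
  have uR: "\<And>\<beta>. \<beta> \<in> R \<Longrightarrow> u \<beta> \<in> R" using W_R[OF u(1) S] by auto
  have "invs (u \<circ> u) = {}"
  proof -
    have "u (u \<beta>) \<in> P" if bP: "\<beta> \<in> P" for \<beta>
    proof (cases "\<beta> \<in> PS S")
      case True
      then have ub: "u \<beta> \<notin> P" using u(2) by (auto simp: invs_def)
      have bR: "\<beta> \<in> R" using bP PR by auto
      have m: "- u \<beta> \<in> P" using notP_iff uR[OF bR] ub by auto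
      have "- u \<beta> \<in> PS S"
        using m True gg_cf_fix[OF S u(1)] by (auto simp: PS_def cf_neg)
      then have "u (- u \<beta>) \<notin> P" using u(2) by (auto simp: invs_def)
      then have "- u (u \<beta>) \<notin> P" using linear_neg[OF lu] by metis
      then show ?thesis using notP_iff uR[OF uR[OF bR]] by auto
    next
      case False
      then have ub: "u \<beta> \<in> P" using u(2) bP by (auto simp: invs_def)
      have "u \<beta> \<notin> PS S"
        using False bP gg_cf_fix[OF S u(1)] by (auto simp: PS_def)
      then show ?thesis using u(2) ub by (auto simp: invs_def)
    qed
    then show ?thesis by (auto simp: invs_def)
  qed
  then have "u \<circ> u = id" using nI_zero_id[OF S gen_group_comp[OF u(1) u(1)]] by (simp add: nI_def)
  then show ?thesis by (metis comp_apply id_apply)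
qed

lemma PS_Sm: "PS Sm = P" by (auto simp: PS_def)

definition cv :: "'a \<Rightarrow> 'a \<Rightarrow> real" where "cv b v = representation (coroot ` Sm) v (coroot b)"

lemma coroot_inj: "inj_on coroot Sm"
proof (rule inj_onI)
  fix x y assume x: "x \<in> Sm" and y: "y \<in> Sm" and e: "coroot x = coroot y"
  have "x = coroot (coroot x)" using coroot_coroot[OF nzSm[OF x]] by simp
  also have "\<dots> = coroot (coroot y)" using e by simp
  also have "\<dots> = y" using coroot_coroot[OF nzSm[OF y]] by simp
  finally show "x = y" .
qed

lemma span_coroot: "span (coroot ` Sm) = UNIV"
proof -
  have "Sm \<subseteq> span (coroot ` Sm)"
  proof
    fix b assume b: "b \<in> Sm"
    have "b = ((b \<bullet> b) / 2) *\<^sub>R coroot b" using nzSm[OF b] by (simp add: coroot_def)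
    moreover have "((b \<bullet> b) / 2) *\<^sub>R coroot b \<in> span (coroot ` Sm)"
      by (rule span_scale[OF span_base[OF imageI[OF b]]])
    ultimately show "b \<in> span (coroot ` Sm)" by simp
  qed
  then have "span Sm \<subseteq> span (coroot ` Sm)" by (rule span_minimal[OF _ subspace_span])
  then show ?thesis using spanSm by auto
qed

lemma indep_coroot: "independent (coroot ` Sm)"
proof (rule card_le_dim_spanning[of _ UNIV])
  show "finite (coroot ` Sm)" using finSm by simp
  show "UNIV \<subseteq> span (coroot ` Sm)" using span_coroot by simp
  have "card (coroot ` Sm) = card Sm" using card_image[OF coroot_inj] .
  also have "\<dots> = dim (span Sm)" using dim_span_eq_card_independent[OF indep] by simp
  finally show "card (coroot ` Sm) \<le> dim (UNIV :: 'a set)" using spanSm by simp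
qed simp

lemma cv_eq: assumes b: "b \<in> Sm" shows "cv b v = cf b v * (b \<bullet> b) / 2"
proof -
  define f where "f x = (if x \<in> coroot ` Sm then cf (coroot x) v * (coroot x \<bullet> coroot x) / 2 else 0)" for x
  have "representation (coroot ` Sm) v = f"
  proof (rule repr_eq)
    show "finite (coroot ` Sm)" using finSm by simp
    show "independent (coroot ` Sm)" using indep_coroot .
    show "v \<in> span (coroot ` Sm)" using span_coroot by simp
    show "\<And>x. x \<notin> coroot ` Sm \<Longrightarrow> f x = 0" by (simp add: f_def)
    have "(\<Sum>x\<in>coroot ` Sm. f x *\<^sub>R x) = (\<Sum>c\<in>Sm. f (coroot c) *\<^sub>R coroot c)"
      using sum.reindex[OF coroot_inj] by simp
    also have "\<dots> = (\<Sum>c\<in>Sm. cf c v *\<^sub>R c)"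
    proof (rule sum.cong)
      fix c assume c: "c \<in> Sm"
      have "c \<bullet> c \<noteq> 0" using nzSm[OF c] by simp
      then show "f (coroot c) *\<^sub>R coroot c = cf c v *\<^sub>R c"
        using c nzSm[OF c] by (simp add: f_def coroot_coroot coroot_def field_simps)
    qed simp
    also have "\<dots> = v" by (rule cf_expand)
    finally show "(\<Sum>x\<in>coroot ` Sm. f x *\<^sub>R x) = v" .
  qed
  then show ?thesis using b nzSm[OF b] by (simp add: cv_def f_def coroot_coroot)
qed

lemma nn_comb_coroot: "nn_comb (coroot ` Sm) v \<longleftrightarrow> (\<forall>b\<in>Sm. cv b v \<in> \<nat>)"
  using nn_comb_repr[OF _ indep_coroot span_coroot] finSm by (simp add: cv_def)

lemma cv_add: "b \<in> Sm \<Longrightarrow> cv b (x + y) = cv b x + cv b y"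
  by (simp add: cv_eq cf_add algebra_simps add_divide_distrib)
lemma cv_diff: "b \<in> Sm \<Longrightarrow> cv b (x - y) = cv b x - cv b y"
  by (simp add: cv_eq cf_diff algebra_simps diff_divide_distrib)
lemma cv_neg: "b \<in> Sm \<Longrightarrow> cv b (- x) = - cv b x"
  by (simp add: cv_eq cf_neg)
lemma cv_scale: "b \<in> Sm \<Longrightarrow> cv b (c *\<^sub>R x) = c * cv b x"
  by (simp add: cv_eq cf_scale)

lemma cv_expand: "(\<Sum>b\<in>Sm. cv b v *\<^sub>R coroot b) = v"
proof -
  have "(\<Sum>b\<in>Sm. cv b v *\<^sub>R coroot b) = (\<Sum>b\<in>Sm. cf b v *\<^sub>R b)"
  proof (rule sum.cong)
    fix b assume b: "b \<in> Sm"
    have "b \<bullet> b \<noteq> 0" using nzSm[OF b] by simp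
    then show "cv b v *\<^sub>R coroot b = cf b v *\<^sub>R b" using b by (simp add: cv_eq coroot_def)
  qed simp
  then show ?thesis by (simp add: cf_expand)
qed

lemma cv_coroot_basis: "b \<in> Sm \<Longrightarrow> c \<in> Sm \<Longrightarrow> cv b (coroot c) = (if b = c then 1 else 0)"
  using nzSm by (simp add: cv_eq coroot_def cf_scale cf_basis)

lemma cv_ext: assumes h: "\<And>b. b \<in> Sm \<Longrightarrow> cv b x = cv b y" shows "x = y"
proof -
  have "(\<Sum>b\<in>Sm. cv b x *\<^sub>R coroot b) = (\<Sum>b\<in>Sm. cv b y *\<^sub>R coroot b)"
    by (rule sum.cong) (simp_all add: h)
  then show ?thesis using cv_expand[of x] cv_expand[of y] by simp
qed

lemma cv_coroot_root: "b \<in> Sm \<Longrightarrow> \<beta> \<in> R \<Longrightarrow> cv b (coroot \<beta>) = cf b \<beta> * (b \<bullet> b) / (\<beta> \<bullet> \<beta>)"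
  by (simp add: cv_eq coroot_def cf_scale)

lemma refl_via_coroot: "refl c v = v - (v \<bullet> c) *\<^sub>R coroot c"
  by (simp add: refl_def coroot_def)

lemma cv_refl: assumes b: "b \<in> Sm" and c: "c \<in> Sm"
  shows "cv b (refl c v) = cv b v - (if b = c then v \<bullet> c else 0)"
  using b c by (simp add: refl_via_coroot cv_diff cv_scale cv_coroot_basis)

lemma inner_expand_cv: "v \<bullet> c = (\<Sum>d\<in>Sm. cv d v * (coroot d \<bullet> c))"
proof -
  have "v \<bullet> c = (\<Sum>d\<in>Sm. cv d v *\<^sub>R coroot d) \<bullet> c" by (simp add: cv_expand)
  also have "\<dots> = (\<Sum>d\<in>Sm. cv d v * (coroot d \<bullet> c))" by (simp add: inner_sum_left)
  finally show ?thesis .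
qed

lemma cv_int_refl: assumes c: "c \<in> Sm" and h: "\<forall>d\<in>Sm. cv d v \<in> \<int>"
  shows "\<forall>b\<in>Sm. cv b (refl c v) \<in> \<int>"
proof
  fix b assume b: "b \<in> Sm"
  have "v \<bullet> c \<in> \<int>"
  proof -
    have "\<forall>d\<in>Sm. cv d v * (coroot d \<bullet> c) \<in> \<int>"
    proof
      fix d assume d: "d \<in> Sm"
      have "coroot d \<bullet> c = 2 * (c \<bullet> d) / (d \<bullet> d)" by (simp add: coroot_def inner_commute)
      then have "coroot d \<bullet> c \<in> \<int>" using cryst[of d c] d c SmR by auto
      then show "cv d v * (coroot d \<bullet> c) \<in> \<int>" using h d by auto
    qed
    then have "(\<Sum>d\<in>Sm. cv d v * (coroot d \<bullet> c)) \<in> \<int>" by (intro Ints_sum) auto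
    then show ?thesis using inner_expand_cv[of v c] by simp
  qed
  then show "cv b (refl c v) \<in> \<int>" using cv_refl[OF b c] h b by auto
qed

lemma cv_int_word: "set ws \<subseteq> Sm \<Longrightarrow> \<forall>d\<in>Sm. cv d v \<in> \<int> \<Longrightarrow> \<forall>b\<in>Sm. cv b (word_map ws v) \<in> \<int>"
  by (induction ws arbitrary: v) (auto intro: cv_int_refl[rule_format])

lemma coroot_int: assumes b: "\<beta> \<in> R" shows "\<forall>d\<in>Sm. cv d (coroot \<beta>) \<in> \<int>"
proof -
  obtain ws a where ws: "set ws \<subseteq> Sm" "a \<in> Sm" "\<beta> = word_map ws a" using root_conj_simple[OF b] by blast
  have "coroot \<beta> = word_map ws (coroot a)" using ws(3) coroot_orth[OF orth_word_map] by simp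
  moreover have "\<forall>d\<in>Sm. cv d (coroot a) \<in> \<int>" using ws(2) by (simp add: cv_coroot_basis)
  ultimately show ?thesis using cv_int_word[OF ws(1)] by simp
qed

lemma coroot_pos_nat: assumes b: "\<beta> \<in> P" shows "\<forall>d\<in>Sm. cv d (coroot \<beta>) \<in> \<nat>"
proof
  fix d assume d: "d \<in> Sm"
  have bR: "\<beta> \<in> R" using b PR by auto
  have "cv d (coroot \<beta>) \<ge> 0" using cv_coroot_root[OF d bR] b d inner_pos[OF bR]
    by (simp add: pos_iff)
  then show "cv d (coroot \<beta>) \<in> \<nat>" using coroot_int[OF bR] d by (simp add: Nats_altdef2)
qed

lemma cv_sign: assumes d: "d \<in> Sm" and b: "\<beta> \<in> R"
  shows "cv d (coroot \<beta>) > 0 \<longleftrightarrow> cf d \<beta> > 0" and "cv d (coroot \<beta>) < 0 \<longleftrightarrow> cf d \<beta> < 0"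
    and "cv d (coroot \<beta>) = 0 \<longleftrightarrow> cf d \<beta> = 0"
proof -
  define q where "q = (d \<bullet> d) / (\<beta> \<bullet> \<beta>)"
  have p: "q > 0" unfolding q_def using inner_pos b d SmR by auto
  have e: "cv d (coroot \<beta>) = cf d \<beta> * q" using cv_coroot_root[OF d b] by (simp add: q_def)
  show "cv d (coroot \<beta>) > 0 \<longleftrightarrow> cf d \<beta> > 0" using p unfolding e by (simp add: zero_less_mult_iff)
  show "cv d (coroot \<beta>) < 0 \<longleftrightarrow> cf d \<beta> < 0" using p unfolding e by (simp add: mult_less_0_iff)
  show "cv d (coroot \<beta>) = 0 \<longleftrightarrow> cf d \<beta> = 0" using p e by simp
qed

end

locale RSi = RS +
  fixes ai :: 'a
  assumes ai: "ai \<in> Sm"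
begin

abbreviation \<omega> where "\<omega> \<equiv> fund_weight Sm ai"

lemma fw_inner: "\<omega> \<bullet> x = cv ai x"
proof -
  define v0 where "v0 = (\<Sum>e\<in>Basis. cv ai e *\<^sub>R e)"
  have v0x: "v0 \<bullet> x = cv ai x" for x
  proof -
    have "v0 \<bullet> x = (\<Sum>e\<in>Basis. cv ai e * (e \<bullet> x))" by (simp add: v0_def inner_sum_left)
    also have "\<dots> = (\<Sum>e\<in>Basis. cv ai ((e \<bullet> x) *\<^sub>R e))" using ai by (simp add: cv_scale mult.commute)
    also have "\<dots> = cv ai (\<Sum>e\<in>Basis. (e \<bullet> x) *\<^sub>R e)"
      using ai by (simp add: cv_eq cf_sum sum_divide_distrib sum_distrib_right)
    also have "(\<Sum>e\<in>Basis. (e \<bullet> x) *\<^sub>R e) = x" using euclidean_representation[of x] by (simp add: inner_commute)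
    finally show ?thesis .
  qed
  have "\<omega> = v0"
    unfolding fund_weight_def
  proof (rule the_equality)
    show "\<forall>b\<in>Sm. 2 * (v0 \<bullet> b) / (b \<bullet> b) = (if b = ai then 1 else 0)"
    proof
      fix b assume b: "b \<in> Sm"
      have "2 * (v0 \<bullet> b) / (b \<bullet> b) = v0 \<bullet> coroot b" by (simp add: inner_coroot)
      also have "\<dots> = (if b = ai then 1 else 0)" using v0x cv_coroot_basis[OF ai b] by auto
      finally show "2 * (v0 \<bullet> b) / (b \<bullet> b) = (if b = ai then 1 else 0)" .
    qed
    fix v assume v: "\<forall>b\<in>Sm. 2 * (v \<bullet> b) / (b \<bullet> b) = (if b = ai then 1 else 0)"
    have "\<forall>b\<in>Sm. (v - v0) \<bullet> coroot b = 0"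
    proof
      fix b assume b: "b \<in> Sm"
      have "v \<bullet> coroot b = (if b = ai then 1 else 0)" using v b by (simp add: inner_coroot)
      moreover have "v0 \<bullet> coroot b = (if b = ai then 1 else 0)" using v0x cv_coroot_basis[OF ai b] by auto
      ultimately show "(v - v0) \<bullet> coroot b = 0" by (simp add: inner_diff_left)
    qed
    then have "(v - v0) \<bullet> (\<Sum>b\<in>Sm. cv b (v - v0) *\<^sub>R coroot b) = 0"
      by (simp add: inner_sum_right)
    then have "(v - v0) \<bullet> (v - v0) = 0" using cv_expand[of "v - v0"] by simp
    then show "v = v0" by simp
  qed
  then show ?thesis using v0x by simp
qed

lemma fw_coroot: "b \<in> Sm \<Longrightarrow> \<omega> \<bullet> coroot b = (if b = ai then 1 else 0)"
  using fw_inner cv_coroot_basis ai by simp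

lemma fw_simple: assumes b: "b \<in> Sm" shows "\<omega> \<bullet> b = (if b = ai then (b \<bullet> b) / 2 else 0)"
proof -
  have "\<omega> \<bullet> b = cf ai b * (ai \<bullet> ai) / 2" using fw_inner cv_eq[OF ai] by simp
  then show ?thesis using b cf_basis[OF b, of ai] by auto
qed

end


locale MS = RSi +
  assumes mins: "minuscule R Sm ai"
begin

abbreviation Lam where "Lam \<equiv> weights_irrep R Sm \<omega>"
abbreviation J where "J \<equiv> Sm - {ai}"

lemma pos_nat: "\<beta> \<in> P \<Longrightarrow> cf b \<beta> \<in> \<nat>"
  by (cases "b \<in> Sm") (auto simp: pos_roots_def nn_comb_iff cf_outside)

lemma Lam_iff: "\<mu> \<in> Lam \<longleftrightarrow> (\<forall>w\<in>W. \<forall>b\<in>Sm. cf b (\<omega> - w \<mu>) \<in> \<nat>)"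
  by (simp add: weights_irrep_def root_le_def nn_comb_iff weyl_eq)

lemma refl_fw: "b \<in> Sm \<Longrightarrow> refl b \<omega> = \<omega> - (if b = ai then b else 0)"
  by (simp add: refl_alt fw_coroot)

lemma fw_dom: "w \<in> W \<Longrightarrow> \<forall>b\<in>Sm. cf b (\<omega> - w \<omega>) \<in> \<nat>"
proof (induction "nI w" arbitrary: w rule: less_induct)
  case less
  show ?case
  proof (cases "nI w = 0")
    case True
    then have "w = id" using nI_zero_id[OF order_refl less.prems] by simp
    then show ?thesis by (simp add: cf_zero)
  next
    case False
    then obtain a where a: "a \<in> Sm" "w a \<notin> P" using exists_simple_inv[OF less.prems order_refl] by blast
    define w' where "w' = w \<circ> refl a"
    have w'W: "w' \<in> W" unfolding w'_def using gen_group_comp[OF less.prems gen_group_refl[OF a(1)]] .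
    have pw: "(\<forall>\<beta>\<in>R. w \<beta> \<in> R) \<and> linear w" using W_props[OF less.prems order_refl] .
    have lt: "nI w' < nI w" using nI_right(1)[OF a(1)] pw a(2) False by (simp add: w'_def)
    have IH: "\<forall>b\<in>Sm. cf b (\<omega> - w' \<omega>) \<in> \<nat>" using less.hyps[OF lt w'W] .
    have ww: "w x = w' (refl a x)" for x by (simp add: w'_def)
    have lw': "linear w'" using gg_linear[OF w'W] .
    have w'a: "w' a = - w a" by (simp add: w'_def refl_self linear_neg[OF pw[THEN conjunct2]])
    have w'aP: "w' a \<in> P" using w'a notP_iff a SmR pw by auto
    have "w \<omega> = w' \<omega> - (if a = ai then w' a else 0)"
      using ww[of \<omega>] refl_fw[OF a(1)] by (simp add: linear_diff[OF lw'] linear_0[OF lw'])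
    then have eq: "\<omega> - w \<omega> = (\<omega> - w' \<omega>) + (if a = ai then w' a else 0)" by simp
    show ?thesis
    proof
      fix b assume b: "b \<in> Sm"
      have "cf b (\<omega> - w \<omega>) = cf b (\<omega> - w' \<omega>) + cf b (if a = ai then w' a else 0)"
        by (simp only: eq cf_add)
      moreover have "cf b (if a = ai then w' a else 0) \<in> \<nat>" using pos_nat[OF w'aP, of b] by (cases "a = ai") (simp_all add: cf_zero)
      ultimately show "cf b (\<omega> - w \<omega>) \<in> \<nat>" using IH b by (metis Nats_add)
    qed
  qed
qed

lemma fw_Lam: "\<omega> \<in> Lam"
proof -
  have "\<forall>w\<in>W. \<forall>b\<in>Sm. cf b (\<omega> - w (w' \<omega>)) \<in> \<nat>" if "w' = id" for w'
    using fw_dom that by simp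
  then show ?thesis unfolding Lam_iff by auto
qed

lemma Lam_W: assumes m: "\<mu> \<in> Lam" and w: "w \<in> W" shows "w \<mu> \<in> Lam"
  unfolding Lam_iff
proof (intro ballI)
  fix v b assume v: "v \<in> W" and b: "b \<in> Sm"
  have "v \<circ> w \<in> W" using gen_group_comp[OF v w] .
  then show "cf b (\<omega> - v (w \<mu>)) \<in> \<nat>" using m b unfolding Lam_iff by fastforce
qed

lemma Lam_orbit: "\<mu> \<in> Lam \<Longrightarrow> \<exists>w\<in>W. w \<omega> = \<mu>"
  using mins fw_Lam unfolding minuscule_def weyl_eq by blast

lemma fw_coroot_int: "\<beta> \<in> R \<Longrightarrow> \<omega> \<bullet> coroot \<beta> \<in> \<int>"
  using coroot_int ai by (simp add: fw_inner)

lemma fw_coroot_le1: assumes b: "\<beta> \<in> R" shows "\<omega> \<bullet> coroot \<beta> < 2"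
proof (rule ccontr)
  assume "\<not> ?thesis"
  then have k2: "\<omega> \<bullet> coroot \<beta> \<ge> 2" by simp
  define k where "k = \<omega> \<bullet> coroot \<beta>"
  have kint: "k - 1 \<in> \<nat>" using fw_coroot_int[OF b] k2 by (simp add: k_def Nats_altdef2)
  have bb: "\<beta> \<bullet> \<beta> > 0" using inner_pos[OF b] .
  have rbW: "refl \<beta> \<in> W" using refl_root_W[OF b] .
  have "\<omega> - \<beta> \<in> Lam"
    unfolding Lam_iff
  proof (intro ballI)
    fix w c assume w: "w \<in> W" and c: "c \<in> Sm"
    have lw: "linear w" using gg_linear[OF w] .
    have wbR: "w \<beta> \<in> R" using W_R[OF w order_refl b] .
    have e1: "\<omega> - w (\<omega> - \<beta>) = (\<omega> - w \<omega>) + w \<beta>" by (simp add: linear_diff[OF lw])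
    show "cf c (\<omega> - w (\<omega> - \<beta>)) \<in> \<nat>"
    proof (cases "w \<beta> \<in> P")
      case True
      have "cf c (\<omega> - w (\<omega> - \<beta>)) = cf c (\<omega> - w \<omega>) + cf c (w \<beta>)" by (simp only: e1 cf_add)
      then show ?thesis using fw_dom[OF w] c pos_nat[OF True] by (metis Nats_add)
    next
      case False
      then have nP: "- w \<beta> \<in> P" using notP_iff wbR by auto
      have wr: "w \<circ> refl \<beta> \<in> W" using gen_group_comp[OF w rbW] .
      have "(w \<circ> refl \<beta>) \<omega> = w \<omega> - k *\<^sub>R w \<beta>"
        by (simp add: refl_alt k_def linear_diff[OF lw] linear_scale[OF lw])
      then have e2: "\<omega> - w (\<omega> - \<beta>) = (\<omega> - (w \<circ> refl \<beta>) \<omega>) + (k - 1) *\<^sub>R (- w \<beta>)"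
        using e1 by (simp add: algebra_simps)
      have "cf c (\<omega> - (w \<circ> refl \<beta>) \<omega>) \<in> \<nat>" using fw_dom[OF wr] c by blast
      moreover have "cf c ((k - 1) *\<^sub>R (- w \<beta>)) = (k - 1) * cf c (- w \<beta>)" by (rule cf_scale)
      moreover have "(k - 1) * cf c (- w \<beta>) \<in> \<nat>" using kint pos_nat[OF nP, of c] by (rule Nats_mult)
      moreover have "cf c (\<omega> - w (\<omega> - \<beta>)) = cf c (\<omega> - (w \<circ> refl \<beta>) \<omega>) + cf c ((k - 1) *\<^sub>R (- w \<beta>))"
        by (simp only: e2 cf_add)
      ultimately show ?thesis by (metis Nats_add)
    qed
  qed
  then obtain v where v: "v \<in> W" "v \<omega> = \<omega> - \<beta>" using Lam_orbit by blast
  have "v \<omega> \<bullet> v \<omega> = \<omega> \<bullet> \<omega>" using orth_inner[OF gen_group_orth[OF v(1)]] .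
  moreover have "(\<omega> - \<beta>) \<bullet> (\<omega> - \<beta>) = \<omega> \<bullet> \<omega> + (1 - k) * (\<beta> \<bullet> \<beta>)"
  proof -
    have "\<omega> \<bullet> \<beta> = k * (\<beta> \<bullet> \<beta>) / 2" using bb by (simp add: k_def inner_coroot)
    then show ?thesis by (simp add: inner_diff_left inner_diff_right inner_commute algebra_simps)
  qed
  ultimately have "(1 - k) * (\<beta> \<bullet> \<beta>) = 0" using v(2) by simp
  then show False using bb k2 k_def by simp
qed

lemma D3: assumes b: "\<beta> \<in> R" shows "\<omega> \<bullet> coroot \<beta> \<in> {-1, 0, 1}"
proof -
  have u: "\<omega> \<bullet> coroot \<beta> < 2" using fw_coroot_le1[OF b] .
  have l: "\<omega> \<bullet> coroot (- \<beta>) < 2" using fw_coroot_le1[OF negR[OF b]] .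
  then have l': "\<omega> \<bullet> coroot \<beta> > -2" by (simp add: coroot_neg)
  obtain z where z: "\<omega> \<bullet> coroot \<beta> = of_int z" using fw_coroot_int[OF b] by (auto elim: Ints_cases)
  then have "z \<in> {-1, 0, 1}" using u l' by auto
  then show ?thesis using z by auto
qed

lemma fw_coroot_cf: assumes b: "\<beta> \<in> R"
  shows "\<omega> \<bullet> coroot \<beta> = 1 \<longleftrightarrow> cf ai \<beta> > 0" and "\<omega> \<bullet> coroot \<beta> = -1 \<longleftrightarrow> cf ai \<beta> < 0"
    and "\<omega> \<bullet> coroot \<beta> = 0 \<longleftrightarrow> cf ai \<beta> = 0"
proof -
  have e: "\<omega> \<bullet> coroot \<beta> = cv ai (coroot \<beta>)" by (simp add: fw_inner)
  note s = cv_sign[OF ai b]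
  have d: "\<omega> \<bullet> coroot \<beta> \<in> {-1, 0, 1}" using D3[OF b] .
  show "\<omega> \<bullet> coroot \<beta> = 1 \<longleftrightarrow> cf ai \<beta> > 0" using d s e by auto
  show "\<omega> \<bullet> coroot \<beta> = -1 \<longleftrightarrow> cf ai \<beta> < 0" using d s e by auto
  show "\<omega> \<bullet> coroot \<beta> = 0 \<longleftrightarrow> cf ai \<beta> = 0" using d s e by auto
qed

end


context MS begin

definition mr :: "('a \<Rightarrow> 'a) \<Rightarrow> 'a \<Rightarrow> bool" where
  "mr w \<mu> \<longleftrightarrow> w \<in> W \<and> w \<omega> = \<mu> \<and> (\<forall>b\<in>J. w b \<in> P)"

lemma refl_fw_J: "b \<in> J \<Longrightarrow> refl b \<omega> = \<omega>"
  using refl_fw by auto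

lemma mr_exists: assumes m: "\<mu> \<in> Lam" shows "\<exists>w. mr w \<mu>"
proof -
  obtain w0 where w0: "w0 \<in> W" "w0 \<omega> = \<mu>" using Lam_orbit[OF m] by blast
  obtain w where w: "w \<in> W" "w \<omega> = \<mu>" and mn: "\<forall>y. y \<in> W \<and> y \<omega> = \<mu> \<longrightarrow> nI w \<le> nI y"
    using ex_has_least_nat[of "\<lambda>w. w \<in> W \<and> w \<omega> = \<mu>" w0 nI] w0 by blast
  have "\<forall>b\<in>J. w b \<in> P"
  proof (rule ccontr)
    assume "\<not> ?thesis"
    then obtain b where b: "b \<in> J" "w b \<notin> P" by blast
    have bS: "b \<in> Sm" using b by auto
    have pw: "(\<forall>\<beta>\<in>R. w \<beta> \<in> R) \<and> linear w" using W_props[OF w(1) order_refl] .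
    have "nI (w \<circ> refl b) = nI w - 1" using nI_right(1)[OF bS] pw b by simp
    moreover have "nI w \<ge> 1" using nI_right(2)[OF bS] pw b fin_invs
      by (metis One_nat_def Suc_leI card_gt_0_iff empty_iff nI_def)
    moreover have "(w \<circ> refl b) \<in> W \<and> (w \<circ> refl b) \<omega> = \<mu>"
      using gen_group_comp[OF w(1) gen_group_refl[OF bS]] refl_fw_J[OF b(1)] w(2) by simp
    ultimately show False using mn by fastforce
  qed
  then show ?thesis using w by (auto simp: mr_def)
qed

lemma mr_pos: assumes w: "mr w \<mu>" and b: "\<beta> \<in> P" and c: "cf ai \<beta> = 0" shows "w \<beta> \<in> P"
proof (rule pos_preserve[OF _ b])
  have wW: "w \<in> W" using w by (simp add: mr_def)
  show "linear w" using gg_linear[OF wW] .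
  show "w \<beta> \<in> R" using W_R[OF wW order_refl] b PR by auto
  fix d assume d: "d \<in> Sm" "cf d \<beta> \<noteq> 0"
  then have "d \<in> J" using c by auto
  then show "w d \<in> P" using w by (simp add: mr_def)
qed

lemma mr_neg: assumes w: "mr w \<mu>" and b: "\<beta> \<in> R" "\<beta> \<notin> P" and c: "cf ai \<beta> = 0" shows "w \<beta> \<notin> P"
proof -
  have wW: "w \<in> W" using w by (simp add: mr_def)
  have "- \<beta> \<in> P" using b notP_iff by auto
  then have "w (- \<beta>) \<in> P" using mr_pos[OF w] c by (simp add: cf_neg)
  then have "- w \<beta> \<in> P" using linear_neg[OF gg_linear[OF wW]] by metis
  then show ?thesis using pos_not_neg by force
qed

lemma gJ_fw: "u \<in> gen_group J \<Longrightarrow> u \<omega> = \<omega>"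
proof -
  assume "u \<in> gen_group J"
  then obtain ws where ws: "set ws \<subseteq> J" "u = word_map ws" by (rule gen_groupE)
  have "word_map ws \<omega> = \<omega>" using ws(1) by (induction ws) (auto simp: refl_fw_J)
  then show ?thesis using ws by simp
qed

lemma stab: "u \<in> W \<Longrightarrow> u \<omega> = \<omega> \<Longrightarrow> u \<in> gen_group J"
proof (induction "nI u" arbitrary: u rule: less_induct)
  case less
  show ?case
  proof (cases "nI u = 0")
    case True
    then have "u = id" using nI_zero_id[OF order_refl less.prems(1)] by simp
    then show ?thesis using gen_group_id by simp
  next
    case False
    then obtain a where a: "a \<in> Sm" "u a \<notin> P" using exists_simple_inv[OF less.prems(1) order_refl] by blast
    have pu: "(\<forall>\<beta>\<in>R. u \<beta> \<in> R) \<and> linear u" using W_props[OF less.prems(1) order_refl] .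
    have uaR: "u a \<in> R" using pu a SmR by auto
    have "- u a \<in> P" using notP_iff uaR a by auto
    then have "cf ai (- u a) \<ge> 0" using ai by (simp add: pos_iff)
    then have le: "\<omega> \<bullet> u a \<le> 0" using ai by (simp add: fw_inner cv_eq cf_neg mult_nonpos_nonneg)
    have "\<omega> \<bullet> a = u \<omega> \<bullet> u a" using orth_inner[OF gen_group_orth[OF less.prems(1)]] by simp
    then have "\<omega> \<bullet> a \<le> 0" using le less.prems(2) by simp
    moreover have "a \<bullet> a > 0" using inner_pos a SmR by auto
    ultimately have aJ: "a \<in> J"
    proof -
      assume h1: "\<omega> \<bullet> a \<le> 0" and h2: "a \<bullet> a > 0"
      show "a \<in> J"
      proof (rule ccontr)
        assume "a \<notin> J"
        then have "a = ai" using a by auto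
        then have "\<omega> \<bullet> a = (a \<bullet> a) / 2" using fw_simple[OF a(1)] by simp
        then show False using h1 h2 by simp
      qed
    qed
    define u' where "u' = u \<circ> refl a"
    have u'W: "u' \<in> W" unfolding u'_def using gen_group_comp[OF less.prems(1) gen_group_refl[OF a(1)]] .
    have u'fw: "u' \<omega> = \<omega>" using refl_fw_J[OF aJ] less.prems(2) by (simp add: u'_def)
    have lt: "nI u' < nI u" using nI_right(1)[OF a(1)] pu a False by (simp add: u'_def)
    have "u' \<in> gen_group J" using less.hyps[OF lt u'W u'fw] .
    then have "u' \<circ> refl a \<in> gen_group J" using gen_group_comp gen_group_refl[OF aJ] by blast
    moreover have "u' \<circ> refl a = u" by (rule ext) (simp add: u'_def)
    ultimately show ?thesis by simp
  qed
qed

lemma mr_unique: assumes w: "mr w \<mu>" and v: "mr v \<mu>" shows "w = v"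
proof -
  have wW: "w \<in> W" and vW: "v \<in> W" using w v by (auto simp: mr_def)
  obtain w' where w': "w' \<in> W" "\<forall>x. w' (w x) = x" "\<forall>x. w (w' x) = x" using gen_group_inv[OF wW] by blast
  define u where "u = w' \<circ> v"
  have uW: "u \<in> W" unfolding u_def using gen_group_comp[OF w'(1) vW] .
  have "u \<omega> = \<omega>" using w v w'(2) by (simp add: u_def mr_def) (metis)
  then have uJ: "u \<in> gen_group J" using stab uW by blast
  have "u = id"
  proof (rule ccontr)
    assume nid: "u \<noteq> id"
    then have "nI u \<noteq> 0" using nI_zero_id[OF order_refl uW] by blast
    then obtain a where a: "a \<in> Sm" "u a \<notin> P" using exists_simple_inv[OF uW order_refl] by blast
    have JS: "J \<subseteq> Sm" by auto
    have aiJ: "ai \<in> Sm - J" using ai by auto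
    have c: "cf ai (u a) = cf ai a" using gg_cf_fix[OF JS uJ aiJ] .
    have uaR: "u a \<in> R" using W_R[OF uW order_refl] a SmR by auto
    show False
    proof (cases "a = ai")
      case True
      then have "cf ai (u a) > 0" using c ai by (simp add: cf_basis)
      then show False using pos_of_coord uaR a by blast
    next
      case False
      then have aJ: "a \<in> J" using a by auto
      have "cf ai (u a) = 0" using c a False by (simp add: cf_basis)
      then have "w (u a) \<notin> P" using mr_neg[OF w uaR a(2)] by simp
      moreover have "w (u a) = v a" using w'(3) by (simp add: u_def)
      moreover have "v a \<in> P" using v aJ by (simp add: mr_def)
      ultimately show False by simp
    qed
  qed
  show ?thesis
  proof
    fix x
    have "v x = w (w' (v x))" using w'(3) by simp
    also have "w' (v x) = u x" by (simp add: u_def)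
    finally show "w x = v x" using \<open>u = id\<close> by simp
  qed
qed

definition minrep :: "'a \<Rightarrow> ('a \<Rightarrow> 'a)" where "minrep \<mu> = (THE w. mr w \<mu>)"

lemma mr_minrep: "mr w \<mu> \<Longrightarrow> minrep \<mu> = w"
  unfolding minrep_def using mr_unique by blast

lemma minrep: "\<mu> \<in> Lam \<Longrightarrow> mr (minrep \<mu>) \<mu>"
  using mr_exists mr_minrep by metis

definition Qt where "Qt = {\<beta>\<in>P. cf ai \<beta> > 0}"
abbreviation Q where "Q \<equiv> coroot_class R Sm ai"

lemma coroot_inj_R: "inj_on coroot R"
proof (rule inj_onI)
  fix x y assume x: "x \<in> R" and y: "y \<in> R" and e: "coroot x = coroot y"
  have "x = coroot (coroot x)" using coroot_coroot[OF nzR[OF x]] by simp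
  also have "\<dots> = coroot (coroot y)" using e by simp
  also have "\<dots> = y" using coroot_coroot[OF nzR[OF y]] by simp
  finally show "x = y" .
qed

lemma Q_eq: "Q = coroot ` Qt"
proof -
  have "\<forall>\<beta>\<in>P. cv ai (coroot \<beta>) = 1 \<longleftrightarrow> cf ai \<beta> > 0"
    using fw_coroot_cf(1) PR by (simp add: fw_inner)
  then show ?thesis unfolding coroot_class_def Qt_def cv_def[symmetric] by auto
qed

lemma QtP: "\<beta> \<in> Qt \<Longrightarrow> \<beta> \<in> P" by (simp add: Qt_def)
lemma QtR: "\<beta> \<in> Qt \<Longrightarrow> \<beta> \<in> R" by (simp add: Qt_def PR)

lemma Q_cases: "\<gamma> \<in> Q \<Longrightarrow> (\<And>\<beta>. \<beta> \<in> Qt \<Longrightarrow> \<gamma> = coroot \<beta> \<Longrightarrow> thesis) \<Longrightarrow> thesis"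
  using Q_eq by blast

lemma Q_cv: "\<gamma> \<in> Q \<Longrightarrow> cv ai \<gamma> = 1"
  by (simp add: coroot_class_def cv_def)

lemma Qt_iff: "\<beta> \<in> R \<Longrightarrow> coroot \<beta> \<in> Q \<longleftrightarrow> \<beta> \<in> Qt"
  using Q_eq coroot_inj_R QtR by (auto dest: inj_onD)

lemma mr_invs_Qt: assumes w: "mr w \<mu>" shows "invs w \<subseteq> Qt"
proof
  fix \<beta> assume b: "\<beta> \<in> invs w"
  then have bP: "\<beta> \<in> P" and wb: "w \<beta> \<notin> P" by (auto simp: invs_def)
  have "cf ai \<beta> \<noteq> 0" using mr_pos[OF w bP] wb by auto
  moreover have "cf ai \<beta> \<ge> 0" using bP ai by (simp add: pos_iff)
  ultimately show "\<beta> \<in> Qt" using bP by (simp add: Qt_def)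
qed

definition F :: "'a \<Rightarrow> 'a set" where "F \<mu> = coroot ` invs (minrep \<mu>)"

lemma F_mem: assumes m: "\<mu> \<in> Lam"
  shows "\<gamma> \<in> F \<mu> \<longleftrightarrow> \<gamma> \<in> Q \<and> minrep \<mu> (coroot \<gamma>) \<notin> P"
proof
  assume "\<gamma> \<in> F \<mu>"
  then obtain \<beta> where b: "\<beta> \<in> invs (minrep \<mu>)" "\<gamma> = coroot \<beta>" by (auto simp: F_def)
  have "\<beta> \<in> Qt" using mr_invs_Qt[OF minrep[OF m]] b by auto
  then show "\<gamma> \<in> Q \<and> minrep \<mu> (coroot \<gamma>) \<notin> P"
    using b Q_eq coroot_coroot[OF nzR[OF QtR]] by (auto simp: invs_def)
next
  assume h: "\<gamma> \<in> Q \<and> minrep \<mu> (coroot \<gamma>) \<notin> P"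
  then obtain \<beta> where b: "\<beta> \<in> Qt" "\<gamma> = coroot \<beta>" using Q_cases by blast
  have "coroot \<gamma> = \<beta>" using b coroot_coroot[OF nzR[OF QtR]] by auto
  then have "\<beta> \<in> invs (minrep \<mu>)" using h b QtP by (auto simp: invs_def)
  then show "\<gamma> \<in> F \<mu>" using b by (auto simp: F_def)
qed

lemma F_sub: "\<mu> \<in> Lam \<Longrightarrow> F \<mu> \<subseteq> Q"
  using F_mem by blast

lemma finQ: "finite Q" using Q_eq finP by (simp add: Qt_def)

lemma Qle_iff: "root_le (coroot ` Sm) x y \<longleftrightarrow> (\<forall>b\<in>Sm. cv b (y - x) \<in> \<nat>)"
  by (simp add: root_le_def nn_comb_coroot)

lemma cf_coroot: "cf c (coroot v) = (2 / (v \<bullet> v)) * cf c v"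
  by (simp add: coroot_def cf_scale)

lemma root_neg_cf: "\<beta> \<in> R \<Longrightarrow> \<beta> \<notin> P \<Longrightarrow> cf c \<beta> \<le> 0"
  using notP_iff[of \<beta>] by (cases "c \<in> Sm") (auto simp: pos_iff cf_neg cf_outside)

lemma F_ideal: assumes m: "\<mu> \<in> Lam" and x: "x \<in> F \<mu>" and y: "y \<in> Q"
  and le: "\<forall>b\<in>Sm. cv b (x - y) \<in> \<nat>" shows "y \<in> F \<mu>"
proof -
  define w where "w = minrep \<mu>"
  have w: "mr w \<mu>" using minrep[OF m] by (simp add: w_def)
  have wW: "w \<in> W" using w by (simp add: mr_def)
  have lw: "linear w" using gg_linear[OF wW] .
  have ow: "orth w" using gen_group_orth[OF wW] .
  have xQ: "x \<in> Q" and wx: "w (coroot x) \<notin> P" using x F_mem[OF m] by (auto simp: w_def)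
  obtain bx where bx: "bx \<in> Qt" "x = coroot bx" using Q_cases[OF xQ] by blast
  obtain by' where by': "by' \<in> Qt" "y = coroot by'" using Q_cases[OF y] by blast
  have cbx: "coroot x = bx" using bx coroot_coroot[OF nzR[OF QtR]] by auto
  have cby: "coroot y = by'" using by' coroot_coroot[OF nzR[OF QtR]] by auto
  have c0: "cv ai (x - y) = 0" using Q_cv[OF xQ] Q_cv[OF y] ai by (simp add: cv_diff)
  have exp: "x - y = (\<Sum>b\<in>Sm. cv b (x - y) *\<^sub>R coroot b)" by (simp add: cv_expand)
  have wy: "w y = w x - (\<Sum>b\<in>Sm. cv b (x - y) *\<^sub>R w (coroot b))"
  proof -
    have "w y = w x - w (x - y)" by (simp add: linear_diff[OF lw])
    also have "w (x - y) = (\<Sum>b\<in>Sm. cv b (x - y) *\<^sub>R w (coroot b))"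
      by (subst exp) (simp add: linear_sum[OF lw] linear_scale[OF lw])
    finally show ?thesis .
  qed
  have wbxR: "w bx \<in> R" using W_R[OF wW order_refl] QtR[OF bx(1)] .
  have wbyR: "w by' \<in> R" using W_R[OF wW order_refl] QtR[OF by'(1)] .
  have "cf c (w y) \<le> 0" for c
  proof -
    have "w x = coroot (w bx)" using bx coroot_orth[OF ow] by simp
    then have "cf c (w x) = (2 / (w bx \<bullet> w bx)) * cf c (w bx)" by (simp add: cf_coroot)
    moreover have "cf c (w bx) \<le> 0" using root_neg_cf[OF wbxR] wx cbx by simp
    moreover have "w bx \<bullet> w bx > 0" using inner_pos[OF wbxR] .
    ultimately have A: "cf c (w x) \<le> 0"
      by (metis divide_nonneg_pos mult_nonneg_nonpos nle_le zero_le_numeral)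
    have B: "cf c (\<Sum>b\<in>Sm. cv b (x - y) *\<^sub>R w (coroot b)) \<ge> 0"
      unfolding cf_sum cf_scale
    proof (rule sum_nonneg)
      fix b assume b: "b \<in> Sm"
      show "0 \<le> cv b (x - y) * cf c (w (coroot b))"
      proof (cases "b = ai")
        case True then show ?thesis using c0 by simp
      next
        case False
        then have wb: "w b \<in> P" using w b by (simp add: mr_def)
        have wbR: "w b \<in> R" using wb PR by auto
        have "w (coroot b) = coroot (w b)" using coroot_orth[OF ow] by simp
        then have "cf c (w (coroot b)) = (2 / (w b \<bullet> w b)) * cf c (w b)" by (simp add: cf_coroot)
        moreover have "cf c (w b) \<ge> 0" using wb by (cases "c \<in> Sm") (auto simp: pos_iff cf_outside)
        moreover have "w b \<bullet> w b > 0" using inner_pos[OF wbR] .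
        ultimately have "cf c (w (coroot b)) \<ge> 0" by simp
        moreover have "cv b (x - y) \<ge> 0" using le b Nats_ge0 by blast
        ultimately show ?thesis by simp
      qed
    qed
    show ?thesis using A B wy by (simp add: cf_diff)
  qed
  moreover have "w y = coroot (w by')" using by' coroot_orth[OF ow] by simp
  ultimately have "cf c (w by') \<le> 0" for c
  proof -
    assume h: "\<And>c. cf c (w y) \<le> 0" and e: "w y = coroot (w by')"
    define q where "q = 2 / (w by' \<bullet> w by')"
    have "cf c (w y) = q * cf c (w by')" using e by (simp add: cf_coroot q_def)
    moreover have "q > 0" using inner_pos[OF wbyR] by (simp add: q_def)
    ultimately show ?thesis using h[of c] by (simp add: mult_le_0_iff)
  qed
  then have "w by' \<notin> P" using cf_nonpos_neg[OF wbyR] by blast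
  then show ?thesis using F_mem[OF m] y cby by (simp add: w_def)
qed

lemma F_in_ideals: "\<mu> \<in> Lam \<Longrightarrow> F \<mu> \<in> lower_ideals Q (root_le (coroot ` Sm))"
  unfolding lower_ideals_def Qle_iff using F_sub F_ideal by blast

end


lemma int_ge1: "(x::real) \<in> \<int> \<Longrightarrow> 0 < x \<Longrightarrow> 1 \<le> x"
proof -
  assume "x \<in> \<int>" "0 < x"
  then obtain z where "x = of_int z" "0 < z" by (metis Ints_cases of_int_0_less_iff)
  then show ?thesis by simp
qed

lemma int_12: "(x::real) \<in> \<int> \<Longrightarrow> 1 \<le> x \<Longrightarrow> x \<le> 2 \<Longrightarrow> x = 1 \<or> x = 2"
proof -
  assume "x \<in> \<int>" "1 \<le> x" "x \<le> 2"
  then obtain z where z: "x = of_int z" "1 \<le> z" "z \<le> 2" by (metis Ints_cases of_int_le_iff of_int_1 of_int_numeral)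
  then have "z = 1 \<or> z = 2" by linarith
  then show ?thesis using z by auto
qed

context RS begin

lemma exists_simple_pos_inner: assumes b: "\<beta> \<in> P" shows "\<exists>a\<in>Sm. a \<bullet> \<beta> > 0"
proof (rule ccontr)
  assume na: "\<not> ?thesis"
  have bR: "\<beta> \<in> R" using b PR by auto
  have nn: "\<forall>c\<in>Sm. 0 \<le> cf c \<beta>" using b by (simp add: pos_iff)
  have "\<beta> \<bullet> \<beta> = (\<Sum>c\<in>Sm. cf c \<beta> *\<^sub>R c) \<bullet> \<beta>" by (simp add: cf_expand)
  also have "\<dots> = (\<Sum>c\<in>Sm. cf c \<beta> * (c \<bullet> \<beta>))" by (simp add: inner_sum_left)
  finally have bb: "\<beta> \<bullet> \<beta> = (\<Sum>c\<in>Sm. cf c \<beta> * (c \<bullet> \<beta>))" .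
  have "\<forall>c\<in>Sm. cf c \<beta> * (c \<bullet> \<beta>) \<le> 0"
  proof
    fix c assume c: "c \<in> Sm"
    have "\<not> (0 < c \<bullet> \<beta>)" using na c by blast
    then have "c \<bullet> \<beta> \<le> 0" by linarith
    then show "cf c \<beta> * (c \<bullet> \<beta>) \<le> 0" using nn c by (intro mult_nonneg_nonpos) auto
  qed
  then have "\<beta> \<bullet> \<beta> \<le> 0" using bb by (simp add: sum_nonpos)
  then show False using inner_pos[OF bR] by simp
qed

end

context MS begin

lemma pair_transfer: assumes w: "mr w \<mu>" shows "\<mu> \<bullet> coroot (w \<epsilon>) = \<omega> \<bullet> coroot \<epsilon>"
proof -
  have wW: "w \<in> W" using w by (simp add: mr_def)
  have ow: "orth w" using gen_group_orth[OF wW] .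
  have "\<mu> \<bullet> coroot (w \<epsilon>) = w \<omega> \<bullet> w (coroot \<epsilon>)" using w coroot_orth[OF ow] by (simp add: mr_def)
  also have "\<dots> = \<omega> \<bullet> coroot \<epsilon>" using orth_inner[OF ow] .
  finally show ?thesis .
qed

lemma surjW: "w \<in> W \<Longrightarrow> \<beta> \<in> R \<Longrightarrow> \<exists>\<epsilon>\<in>R. w \<epsilon> = \<beta>"
  using gg_surj[OF SmR] by blast

lemma down_step: assumes m: "\<mu> \<in> Lam" and a: "a \<in> Sm" and p: "\<mu> \<bullet> coroot a = -1"
  shows "refl a \<mu> \<in> Lam" and "refl a \<mu> = \<mu> + a" and "\<exists>\<gamma>0\<in>F \<mu>. F (refl a \<mu>) = F \<mu> - {\<gamma>0}"
proof -
  define w where "w = minrep \<mu>"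
  have w: "mr w \<mu>" using minrep[OF m] by (simp add: w_def)
  have wW: "w \<in> W" using w by (simp add: mr_def)
  have lw: "linear w" using gg_linear[OF wW] .
  have aR: "a \<in> R" using a SmR by auto
  obtain \<epsilon> where e: "\<epsilon> \<in> R" "w \<epsilon> = a" using surjW[OF wW aR] by blast
  have "\<omega> \<bullet> coroot \<epsilon> = -1" using pair_transfer[OF w, of \<epsilon>] e p by simp
  then have ce: "cf ai \<epsilon> < 0" using fw_coroot_cf(2)[OF e(1)] by simp
  then have eP: "\<epsilon> \<notin> P" using neg_of_coord e(1) by blast
  have meP: "- \<epsilon> \<in> P" using eP notP_iff e(1) by auto
  show "refl a \<mu> \<in> Lam" using Lam_W[OF m gen_group_refl[OF a]] .
  show "refl a \<mu> = \<mu> + a" using p by (simp add: refl_alt)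
  define w2 where "w2 = refl a \<circ> w"
  have w2W: "w2 \<in> W" unfolding w2_def using gen_group_comp[OF gen_group_refl[OF a] wW] .
  have inj: "inj w" using gg_inj[OF wW] .
  have mr2: "mr w2 (refl a \<mu>)"
    unfolding mr_def
  proof (intro conjI ballI)
    show "w2 \<in> W" using w2W .
    show "w2 \<omega> = refl a \<mu>" using w by (simp add: w2_def mr_def)
    fix b assume b: "b \<in> J"
    have wb: "w b \<in> P" using w b by (simp add: mr_def)
    have "w b \<noteq> a"
    proof
      assume "w b = a"
      then have "b = \<epsilon>" using e inj by (metis injD)
      then show False using eP Sm_pos b by auto
    qed
    then show "w2 b \<in> P" using refl_simple_pos[OF a wb] by (simp add: w2_def)
  qed
  have mn: "minrep (refl a \<mu>) = w2" using mr_minrep[OF mr2] .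
  have inv2: "invs w2 = invs w - {- \<epsilon>}"
  proof (rule set_eqI)
    fix \<beta>
    show "\<beta> \<in> invs w2 \<longleftrightarrow> \<beta> \<in> invs w - {- \<epsilon>}"
    proof (cases "\<beta> \<in> P")
      case True
      have wbR: "w \<beta> \<in> R" using W_R[OF wW order_refl] True PR by auto
      have c1: "w \<beta> \<noteq> a" using e inj True eP by (metis injD)
      have c2: "w \<beta> = - a \<longleftrightarrow> \<beta> = - \<epsilon>"
        using e inj linear_neg[OF lw] by (metis injD)
      show ?thesis using refl_simple_char[OF a wbR] True c1 c2 e meP
        by (auto simp: invs_def w2_def linear_neg[OF lw])
    next
      case False
      then show ?thesis by (auto simp: invs_def)
    qed
  qed
  have mi: "- \<epsilon> \<in> invs w" using meP e linear_neg[OF lw] Sm_pos[OF a] pos_not_neg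
    by (auto simp: invs_def)
  have sub: "invs w \<subseteq> R" by (auto simp: invs_def PR)
  have "F (refl a \<mu>) = coroot ` (invs w - {- \<epsilon>})" using mn inv2 by (simp add: F_def)
  also have "\<dots> = coroot ` invs w - coroot ` {- \<epsilon>}"
    by (rule inj_on_image_set_diff[OF coroot_inj_R]) (use sub negR[OF e(1)] in auto)
  finally have "F (refl a \<mu>) = F \<mu> - {coroot (- \<epsilon>)}" by (simp add: F_def w_def)
  moreover have "coroot (- \<epsilon>) \<in> F \<mu>" using mi by (simp add: F_def w_def)
  ultimately show "\<exists>\<gamma>0\<in>F \<mu>. F (refl a \<mu>) = F \<mu> - {\<gamma>0}" by blast
qed

lemma cv_nat_coroot_pos: "\<rho> \<in> P \<Longrightarrow> \<forall>b\<in>Sm. cv b (coroot \<rho>) \<in> \<nat>"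
  using coroot_pos_nat by blast

lemma up_simple: assumes m: "\<mu> \<in> Lam" and g: "\<gamma> \<in> Q" and ng: "\<gamma> \<notin> F \<mu>"
  and below: "\<And>\<gamma>'. \<gamma>' \<in> Q \<Longrightarrow> (\<forall>b\<in>Sm. cv b (\<gamma> - \<gamma>') \<in> \<nat>) \<Longrightarrow> \<gamma>' \<noteq> \<gamma> \<Longrightarrow> \<gamma>' \<in> F \<mu>"
  shows "minrep \<mu> (coroot \<gamma>) \<in> Sm"
proof (rule ccontr)
  assume nS: "minrep \<mu> (coroot \<gamma>) \<notin> Sm"
  define w where "w = minrep \<mu>"
  have w: "mr w \<mu>" using minrep[OF m] by (simp add: w_def)
  have wW: "w \<in> W" using w by (simp add: mr_def)
  have lw: "linear w" using gg_linear[OF wW] .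
  have ow: "orth w" using gen_group_orth[OF wW] .
  obtain \<beta> where b: "\<beta> \<in> Qt" "\<gamma> = coroot \<beta>" using Q_cases[OF g] by blast
  have bR: "\<beta> \<in> R" using QtR[OF b(1)] .
  have bP: "\<beta> \<in> P" using QtP[OF b(1)] .
  have cg: "coroot \<gamma> = \<beta>" using b coroot_coroot[OF nzR[OF bR]] by simp
  define \<delta> where "\<delta> = w \<beta>"
  have dR: "\<delta> \<in> R" using W_R[OF wW order_refl bR] by (simp add: \<delta>_def)
  have dP: "\<delta> \<in> P" using ng F_mem[OF m] g cg by (simp add: \<delta>_def w_def)
  have dS: "\<delta> \<notin> Sm" using nS cg by (simp add: \<delta>_def w_def)
  obtain \<alpha> where al: "\<alpha> \<in> Sm" "\<alpha> \<bullet> \<delta> > 0" using exists_simple_pos_inner[OF dP] by blast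
  have alR: "\<alpha> \<in> R" using al SmR by auto
  have alP: "\<alpha> \<in> P" using Sm_pos al by auto
  have dna: "\<delta> \<noteq> \<alpha>" using dS al by auto
  obtain \<epsilon> where e: "\<epsilon> \<in> R" "w \<epsilon> = \<alpha>" using surjW[OF wW alR] by blast
  have be: "\<beta> \<bullet> \<epsilon> > 0" using al orth_inner[OF ow, of \<beta> \<epsilon>] e by (simp add: \<delta>_def inner_commute)
  have bb: "\<beta> \<bullet> \<beta> > 0" using inner_pos[OF bR] .
  have ee: "\<epsilon> \<bullet> \<epsilon> > 0" using inner_pos[OF e(1)] .
  define m where "m = \<gamma> \<bullet> \<epsilon>"
  have m_eq: "m = 2 * (\<epsilon> \<bullet> \<beta>) / (\<beta> \<bullet> \<beta>)" by (simp add: m_def b coroot_def inner_commute)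
  have mint: "m \<in> \<int>" using cryst[OF bR e(1)] m_eq by simp
  have mpos: "m > 0" using m_eq be bb by (simp add: inner_commute)
  have m1: "m \<ge> 1" using int_ge1[OF mint mpos] .
  have mN: "m \<in> \<nat>" using mint mpos by (simp add: Nats_altdef2)
  define \<rho> where "\<rho> = refl \<epsilon> \<beta>"
  have rR: "\<rho> \<in> R" using reflR[OF e(1) bR] by (simp add: \<rho>_def)
  have wr: "w \<rho> = refl \<alpha> \<delta>" using refl_conj[OF ow, of \<epsilon> \<beta>] e by (simp add: \<rho>_def \<delta>_def)
  have wrP: "w \<rho> \<in> P" using wr refl_simple_pos[OF al(1) dP dna] by simp
  have cr: "coroot \<rho> = \<gamma> - m *\<^sub>R coroot \<epsilon>"
    using coroot_orth[OF orth_refl, of \<epsilon> \<beta>] by (simp add: \<rho>_def b refl_via_coroot m_def)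
  have wcr: "\<omega> \<bullet> coroot \<rho> = 1 - m * (\<omega> \<bullet> coroot \<epsilon>)"
    using cr fw_coroot_cf(1)[OF bR] b(1) by (simp add: Qt_def inner_diff_right b)
  have d3r: "\<omega> \<bullet> coroot \<rho> \<in> {-1, 0, 1}" using D3[OF rR] .
  have d3u: "\<omega> \<bullet> coroot \<rho> \<le> 1" and d3l: "\<omega> \<bullet> coroot \<rho> \<ge> -1" using d3r by auto
  have cvn: "\<forall>b\<in>Sm. cv b (m *\<^sub>R coroot \<epsilon>) \<in> \<nat>" if "\<epsilon> \<in> P"
  proof
    fix b assume b: "b \<in> Sm"
    have "cv b (m *\<^sub>R coroot \<epsilon>) = m * cv b (coroot \<epsilon>)" using cv_scale[OF b] .
    moreover have "cv b (coroot \<epsilon>) \<in> \<nat>" using cv_nat_coroot_pos[OF that] b by blast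
    ultimately show "cv b (m *\<^sub>R coroot \<epsilon>) \<in> \<nat>" using mN by simp
  qed
  have ce0: "coroot \<epsilon> \<noteq> 0" using nzR[OF e(1)] by (simp add: coroot_zero_iff)
  consider "cf ai \<epsilon> < 0" | "cf ai \<epsilon> = 0" | "cf ai \<epsilon> > 0" by linarith
  then show False
  proof cases
    case 1
    then have "\<omega> \<bullet> coroot \<epsilon> = -1" using fw_coroot_cf(2)[OF e(1)] by simp
    then have "\<omega> \<bullet> coroot \<rho> = 1 + m" using wcr by simp
    then show False using d3u m1 by linarith
  next
    case 2
    then have we0: "\<omega> \<bullet> coroot \<epsilon> = 0" using fw_coroot_cf(3)[OF e(1)] by simp
    show False
    proof (cases "\<epsilon> \<in> P")
      case False
      then have "w \<epsilon> \<notin> P" using mr_neg[OF w e(1) False 2] by simp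
      then show False using e alP by simp
    next
      case True
      have "\<omega> \<bullet> coroot \<rho> = 1" using wcr we0 by simp
      then have "cf ai \<rho> > 0" using fw_coroot_cf(1)[OF rR] by simp
      then have rQt: "\<rho> \<in> Qt" using pos_of_coord[OF rR] by (simp add: Qt_def)
      then have crQ: "coroot \<rho> \<in> Q" using Q_eq by auto
      have "\<forall>b\<in>Sm. cv b (\<gamma> - coroot \<rho>) \<in> \<nat>" using cvn[OF True] cr by simp
      moreover have "coroot \<rho> \<noteq> \<gamma>" using cr ce0 mpos by simp
      ultimately have "coroot \<rho> \<in> F \<mu>" using below crQ by blast
      then have "w \<rho> \<notin> P" using F_mem[OF m] coroot_coroot[OF nzR[OF rR]] by (simp add: w_def)
      then show False using wrP by simp
    qed
  next
    case 3
    have eP: "\<epsilon> \<in> P" using pos_of_coord[OF e(1) 3] .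
    have we1: "\<omega> \<bullet> coroot \<epsilon> = 1" using fw_coroot_cf(1)[OF e(1)] 3 by simp
    have eQt: "\<epsilon> \<in> Qt" using eP 3 by (simp add: Qt_def)
    have ceQ: "coroot \<epsilon> \<in> Q" using eQt Q_eq by auto
    have cenF: "coroot \<epsilon> \<notin> F \<mu>"
      using F_mem[OF m] coroot_coroot[OF nzR[OF e(1)]] e alP by (simp add: w_def)
    have "\<omega> \<bullet> coroot \<rho> = 1 - m" using wcr we1 by simp
    then have m2: "m \<le> 2" using d3l by linarith
    define \<tau> where "\<tau> = \<gamma> - coroot \<epsilon>"
    have sublemma: False if s: "\<sigma> \<in> R" "coroot \<sigma> = \<tau>" "\<sigma> \<in> P" for \<sigma>
    proof -
      have "\<forall>b\<in>Sm. cv b (\<gamma> - coroot \<epsilon>) \<in> \<nat>" using cv_nat_coroot_pos[OF s(3)] s(2) by (simp add: \<tau>_def)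
      moreover have "coroot \<epsilon> \<noteq> \<gamma>" using s(2) nzR[OF s(1)] coroot_zero_iff[of \<sigma>] by (auto simp: \<tau>_def)
      ultimately have "coroot \<epsilon> \<in> F \<mu>" using below ceQ by blast
      then show False using cenF by simp
    qed
    have "m = 1 \<or> m = 2" using int_12[OF mint m1 m2] .
    then show False
    proof
      assume mm: "m = 1"
      have crt: "coroot \<rho> = \<tau>" using cr mm by (simp add: \<tau>_def)
      show False
      proof (cases "\<rho> \<in> P")
        case True then show False using sublemma[OF rR crt] by simp
      next
        case False
        have "\<omega> \<bullet> coroot \<rho> = 0" using wcr we1 mm by simp
        then have "cf ai \<rho> = 0" using fw_coroot_cf(3)[OF rR] by simp
        then have "w \<rho> \<notin> P" using mr_neg[OF w rR False] by simp
        then show False using wrP by simp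
      qed
    next
      assume mm: "m = 2"
      have bbe: "\<beta> \<bullet> \<epsilon> = \<beta> \<bullet> \<beta>" using m_eq mm bb by (simp add: inner_commute field_simps)
      define k where "k = \<beta> \<bullet> coroot \<epsilon>"
      have k_eq: "k = 2 * (\<beta> \<bullet> \<epsilon>) / (\<epsilon> \<bullet> \<epsilon>)" by (simp add: k_def inner_coroot)
      have kint: "k \<in> \<int>" using cryst[OF e(1) bR] k_eq by simp
      have kpos: "k > 0" using k_eq be ee by simp
      have nbe: "\<beta> \<noteq> \<epsilon>" using dna e by (auto simp: \<delta>_def)
      have "(\<epsilon> - \<beta>) \<bullet> (\<epsilon> - \<beta>) = \<epsilon> \<bullet> \<epsilon> - \<beta> \<bullet> \<beta>"
        using bbe by (simp add: inner_diff_left inner_diff_right inner_commute)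
      moreover have "(\<epsilon> - \<beta>) \<bullet> (\<epsilon> - \<beta>) > 0" using nbe by simp
      ultimately have "\<epsilon> \<bullet> \<epsilon> > \<beta> \<bullet> \<beta>" by simp
      moreover have "k * (\<epsilon> \<bullet> \<epsilon>) = 2 * (\<beta> \<bullet> \<beta>)" using k_eq bbe ee by (simp add: field_simps)
      ultimately have "k * (\<epsilon> \<bullet> \<epsilon>) < 2 * (\<epsilon> \<bullet> \<epsilon>)" by simp
      then have "k < 2" using ee by (simp add: mult_less_cancel_right_pos)
      then have k1: "k = 1" using int_ge1[OF kint kpos] int_12[OF kint] by fastforce
      define \<rho>' where "\<rho>' = refl \<beta> \<epsilon>"
      have r'R: "\<rho>' \<in> R" using reflR[OF bR e(1)] by (simp add: \<rho>'_def)
      have cr': "coroot \<rho>' = - \<tau>"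
      proof -
        have "coroot \<rho>' = refl \<beta> (coroot \<epsilon>)" using coroot_orth[OF orth_refl, of \<beta> \<epsilon>] by (simp add: \<rho>'_def)
        also have "\<dots> = coroot \<epsilon> - (coroot \<epsilon> \<bullet> \<beta>) *\<^sub>R coroot \<beta>" by (rule refl_via_coroot)
        also have "coroot \<epsilon> \<bullet> \<beta> = k" using k_def by (simp add: inner_commute)
        finally show ?thesis using k1 b by (simp add: \<tau>_def)
      qed
      define \<sigma> where "\<sigma> = - \<rho>'"
      have sR: "\<sigma> \<in> R" using negR[OF r'R] by (simp add: \<sigma>_def)
      have cs: "coroot \<sigma> = \<tau>" using cr' by (simp add: \<sigma>_def coroot_neg)
      show False
      proof (cases "\<sigma> \<in> P")
        case True then show False using sublemma[OF sR cs] by simp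
      next
        case False
        then have r'P: "\<rho>' \<in> P" using notP_iff sR by (simp add: \<sigma>_def)
        define \<eta> where "\<eta> = coroot (- \<rho>)"
        have mrR: "- \<rho> \<in> R" using negR[OF rR] .
        have eta: "\<eta> = 2 *\<^sub>R coroot \<epsilon> - \<gamma>" using cr mm by (simp add: \<eta>_def coroot_neg)
        have "\<omega> \<bullet> coroot (- \<rho>) = 1" using wcr we1 mm by (simp add: coroot_neg)
        then have "cf ai (- \<rho>) > 0" using fw_coroot_cf(1)[OF mrR] by simp
        then have "- \<rho> \<in> Qt" using pos_of_coord[OF mrR] by (simp add: Qt_def)
        then have etaQ: "\<eta> \<in> Q" using Q_eq by (auto simp: \<eta>_def)
        have "w (- \<rho>) = - w \<rho>" by (simp add: linear_neg[OF lw])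
        then have "w (- \<rho>) \<notin> P" using pos_not_neg[OF wrP] by simp
        then have etaF: "\<eta> \<in> F \<mu>" using F_mem[OF m] etaQ coroot_coroot[OF nzR[OF mrR]] by (simp add: \<eta>_def w_def)
        have "\<eta> - coroot \<epsilon> = coroot \<epsilon> - \<gamma>" using eta by (simp add: scaleR_2)
        also have "\<dots> = coroot \<rho>'" using cr' by (simp add: \<tau>_def)
        finally have "\<eta> - coroot \<epsilon> = coroot \<rho>'" .
        then have "\<forall>b\<in>Sm. cv b (\<eta> - coroot \<epsilon>) \<in> \<nat>" using cv_nat_coroot_pos[OF r'P] by simp
        then have "coroot \<epsilon> \<in> F \<mu>" using F_ideal[OF m etaF ceQ] by simp
        then show False using cenF by simp
      qed
    qed
  qed
qed

end


context MS begin

lemma up_step: assumes m: "\<mu> \<in> Lam" and g: "\<gamma> \<in> Q" and ng: "\<gamma> \<notin> F \<mu>"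
  and below: "\<And>\<gamma>'. \<gamma>' \<in> Q \<Longrightarrow> (\<forall>b\<in>Sm. cv b (\<gamma> - \<gamma>') \<in> \<nat>) \<Longrightarrow> \<gamma>' \<noteq> \<gamma> \<Longrightarrow> \<gamma>' \<in> F \<mu>"
  shows "\<exists>a\<in>Sm. refl a \<mu> = \<mu> - a \<and> refl a \<mu> \<in> Lam \<and> F (refl a \<mu>) = insert \<gamma> (F \<mu>)"
proof -
  define w where "w = minrep \<mu>"
  have w: "mr w \<mu>" using minrep[OF m] by (simp add: w_def)
  have wW: "w \<in> W" using w by (simp add: mr_def)
  have lw: "linear w" using gg_linear[OF wW] .
  have inj: "inj w" using gg_inj[OF wW] .
  obtain \<beta> where b: "\<beta> \<in> Qt" "\<gamma> = coroot \<beta>" using Q_cases[OF g] by blast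
  have bR: "\<beta> \<in> R" using QtR[OF b(1)] .
  have bP: "\<beta> \<in> P" using QtP[OF b(1)] .
  have cg: "coroot \<gamma> = \<beta>" using b coroot_coroot[OF nzR[OF bR]] by simp
  define a where "a = w \<beta>"
  have a: "a \<in> Sm" using up_simple[OF m g ng below] cg by (simp add: a_def w_def)
  have cfb: "cf ai \<beta> > 0" using b(1) by (simp add: Qt_def)
  have "\<mu> \<bullet> coroot a = \<omega> \<bullet> coroot \<beta>" using pair_transfer[OF w] by (simp add: a_def)
  also have "\<dots> = 1" using fw_coroot_cf(1)[OF bR] cfb by simp
  finally have p: "\<mu> \<bullet> coroot a = 1" .
  have r1: "refl a \<mu> = \<mu> - a" using p by (simp add: refl_alt)
  have r2: "refl a \<mu> \<in> Lam" using Lam_W[OF m gen_group_refl[OF a]] .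
  define w2 where "w2 = refl a \<circ> w"
  have mr2: "mr w2 (refl a \<mu>)"
    unfolding mr_def
  proof (intro conjI ballI)
    show "w2 \<in> W" unfolding w2_def using gen_group_comp[OF gen_group_refl[OF a] wW] .
    show "w2 \<omega> = refl a \<mu>" using w by (simp add: w2_def mr_def)
    fix c assume c: "c \<in> J"
    have wc: "w c \<in> P" using w c by (simp add: mr_def)
    have "w c \<noteq> a"
    proof
      assume "w c = a"
      then have "c = \<beta>" using inj by (simp add: a_def injD)
      then show False using c cfb cf_basis[of c ai] by auto
    qed
    then show "w2 c \<in> P" using refl_simple_pos[OF a wc] by (simp add: w2_def)
  qed
  have inv2: "invs w2 = insert \<beta> (invs w)"
  proof (rule set_eqI)
    fix \<beta>'
    show "\<beta>' \<in> invs w2 \<longleftrightarrow> \<beta>' \<in> insert \<beta> (invs w)"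
    proof (cases "\<beta>' \<in> P")
      case True
      have wbR: "w \<beta>' \<in> R" using W_R[OF wW order_refl] True PR by auto
      have c1: "w \<beta>' = a \<longleftrightarrow> \<beta>' = \<beta>" using inj by (auto simp: a_def injD)
      have c2: "w \<beta>' \<noteq> - a"
      proof
        assume "w \<beta>' = - a"
        then have "w \<beta>' = w (- \<beta>)" by (simp add: a_def linear_neg[OF lw])
        then have "\<beta>' = - \<beta>" using inj by (simp add: injD)
        then show False using True pos_not_neg[OF bP] by simp
      qed
      show ?thesis using refl_simple_char[OF a wbR] True c1 c2 bP
        by (auto simp: invs_def w2_def)
    next
      case False
      then show ?thesis using bP by (auto simp: invs_def)
    qed
  qed
  have "F (refl a \<mu>) = coroot ` invs w2" using mr_minrep[OF mr2] by (simp add: F_def)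
  also have "\<dots> = insert \<gamma> (F \<mu>)" using inv2 b by (simp add: F_def w_def)
  finally show ?thesis using a r1 r2 by blast
qed

lemma orbit_norm: assumes m: "\<mu> \<in> Lam" shows "\<mu> \<bullet> \<mu> = \<omega> \<bullet> \<omega>"
proof -
  obtain w where w: "w \<in> W" "w \<omega> = \<mu>" using Lam_orbit[OF m] by blast
  then show ?thesis using orth_inner[OF gen_group_orth[OF w(1)]] by metis
qed

lemma inj_F: assumes m: "\<mu> \<in> Lam" and n: "\<nu> \<in> Lam" and e: "F \<mu> = F \<nu>" shows "\<mu> = \<nu>"
proof -
  have wm: "mr (minrep \<mu>) \<mu>" and wn: "mr (minrep \<nu>) \<nu>" using minrep m n by auto
  have s1: "invs (minrep \<mu>) \<subseteq> R" and s2: "invs (minrep \<nu>) \<subseteq> R" by (auto simp: invs_def PR)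
  have "invs (minrep \<mu>) = invs (minrep \<nu>)"
    using e inj_on_image_eq_iff[OF coroot_inj_R s1 s2] by (simp add: F_def)
  then have "minrep \<mu> = minrep \<nu>" using inv_determines wm wn by (simp add: mr_def)
  then show ?thesis using wm wn by (simp add: mr_def)
qed

lemma finF: "\<mu> \<in> Lam \<Longrightarrow> finite (F \<mu>)"
  using finQ F_sub finite_subset by blast

lemma le_imp_sub: "\<mu> \<in> Lam \<Longrightarrow> \<nu> \<in> Lam \<Longrightarrow> \<forall>b\<in>Sm. cf b (\<nu> - \<mu>) \<in> \<nat> \<Longrightarrow> F \<nu> \<subseteq> F \<mu>"
proof (induction "card (F \<mu>)" arbitrary: \<mu> rule: less_induct)
  case less
  note m = less.prems(1) and n = less.prems(2) and le = less.prems(3)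
  show ?case
  proof (cases "\<mu> = \<nu>")
    case True then show ?thesis by simp
  next
    case False
    define d where "d = \<nu> - \<mu>"
    have d0: "d \<noteq> 0" using False by (simp add: d_def)
    have "\<nu> \<bullet> \<nu> = \<mu> \<bullet> \<mu>" using orbit_norm[OF m] orbit_norm[OF n] by simp
    moreover have "\<nu> = \<mu> + d" by (simp add: d_def)
    ultimately have "(\<mu> + d) \<bullet> (\<mu> + d) = \<mu> \<bullet> \<mu>" by simp
    then have "2 * (\<mu> \<bullet> d) + d \<bullet> d = 0" by (simp add: inner_add_left inner_add_right inner_commute)
    moreover have "d \<bullet> d > 0" using d0 by simp
    ultimately have md: "\<mu> \<bullet> d < 0" by linarith
    have "\<mu> \<bullet> d = (\<Sum>b\<in>Sm. cf b d * (\<mu> \<bullet> b))"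
    proof -
      have "\<mu> \<bullet> d = \<mu> \<bullet> (\<Sum>b\<in>Sm. cf b d *\<^sub>R b)" by (simp add: cf_expand)
      then show ?thesis by (simp add: inner_sum_right)
    qed
    then have "\<exists>b\<in>Sm. cf b d * (\<mu> \<bullet> b) < 0" using md
      by (metis (no_types, lifting) not_less sum_nonneg)
    then obtain b where b: "b \<in> Sm" "cf b d * (\<mu> \<bullet> b) < 0" by blast
    have cbd: "cf b d \<ge> 0" using le b Nats_ge0 by (simp add: d_def)
    have mb: "\<mu> \<bullet> b < 0" and cbd': "cf b d > 0" using b(2) cbd by (auto simp: mult_less_0_iff)
    have bR: "b \<in> R" using b SmR by auto
    have mcb: "\<mu> \<bullet> coroot b < 0" using mb inner_pos[OF bR] by (simp add: inner_coroot divide_neg_pos)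
    obtain \<epsilon> where e: "\<epsilon> \<in> R" "minrep \<mu> \<epsilon> = b"
      using surjW bR minrep[OF m] by (metis mr_def)
    have "\<mu> \<bullet> coroot b = \<omega> \<bullet> coroot \<epsilon>" using pair_transfer[OF minrep[OF m]] e by metis
    then have "\<mu> \<bullet> coroot b \<in> {-1, 0, 1}" using D3[OF e(1)] by simp
    then have p: "\<mu> \<bullet> coroot b = -1" using mcb by auto
    note ds = down_step[OF m b(1) p]
    obtain \<gamma>0 where g0: "\<gamma>0 \<in> F \<mu>" "F (refl b \<mu>) = F \<mu> - {\<gamma>0}" using ds(3) by blast
    have lt: "card (F (refl b \<mu>)) < card (F \<mu>)" unfolding g0(2) by (rule card_Diff1_less[OF finF[OF m] g0(1)])
    have le': "\<forall>c\<in>Sm. cf c (\<nu> - refl b \<mu>) \<in> \<nat>"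
    proof
      fix c assume c: "c \<in> Sm"
      have "cf c (\<nu> - refl b \<mu>) = cf c d - cf c b" using ds(2) by (simp add: d_def cf_diff cf_add)
      moreover have "cf c d \<in> \<nat>" using le c by (simp add: d_def)
      moreover have "cf c b = (if c = b then 1 else 0)" using cf_basis[OF b(1)] .
      moreover have "cf b d \<ge> 1" using int_ge1[of "cf b d"] cbd' le b Nats_subset_Ints by (auto simp: d_def)
      ultimately show "cf c (\<nu> - refl b \<mu>) \<in> \<nat>" by (auto simp: Nats_altdef2)
    qed
    have "F \<nu> \<subseteq> F (refl b \<mu>)" using less.hyps[OF lt ds(1) n le'] .
    then show ?thesis using g0 by auto
  qed
qed

definition ht :: "'a \<Rightarrow> real" where "ht x = (\<Sum>b\<in>Sm. cv b x)"

lemma ht_diff: "ht (x - y) = ht x - ht y"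
  by (simp add: ht_def cv_diff sum_subtractf)

lemma ht_pos: assumes h: "\<forall>b\<in>Sm. cv b x \<in> \<nat>" and x: "x \<noteq> 0" shows "ht x > 0"
proof -
  have nn: "\<forall>b\<in>Sm. cv b x \<ge> 0" using h Nats_ge0 by blast
  have "\<exists>b\<in>Sm. cv b x \<noteq> 0"
  proof (rule ccontr)
    assume "\<not> ?thesis"
    then have "\<forall>b\<in>Sm. cv b x = cv b 0" using cv_scale[of _ 0 x] by auto
    then have "x = 0" using cv_ext by blast
    then show False using x by simp
  qed
  then obtain b where b: "b \<in> Sm" "cv b x > 0" using nn by force
  have "ht x \<ge> cv b x" unfolding ht_def
    using member_le_sum[of b Sm "\<lambda>b. cv b x"] b nn finSm by auto
  then show ?thesis using b by simp
qed

lemma ht_nonneg: "\<forall>b\<in>Sm. cv b x \<in> \<nat> \<Longrightarrow> ht x \<ge> 0"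
  unfolding ht_def using Nats_ge0 by (simp add: sum_nonneg)

lemma finite_min: "finite D \<Longrightarrow> D \<noteq> {} \<Longrightarrow> \<exists>x\<in>D. \<forall>y\<in>D. (f::'b \<Rightarrow> real) x \<le> f y"
proof -
  assume f: "finite D" and ne: "D \<noteq> {}"
  have "Min (f ` D) \<in> f ` D" using f ne by simp
  then obtain x where x: "x \<in> D" "f x = Min (f ` D)" by auto
  show ?thesis
  proof (intro bexI[OF _ x(1)] ballI)
    fix y assume "y \<in> D"
    then show "f x \<le> f y" using x(2) Min_le[of "f ` D" "f y"] f by auto
  qed
qed

lemma finite_max: "finite D \<Longrightarrow> D \<noteq> {} \<Longrightarrow> \<exists>x\<in>D. \<forall>y\<in>D. (f::'b \<Rightarrow> real) y \<le> f x"
proof -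
  assume f: "finite D" and ne: "D \<noteq> {}"
  have "Max (f ` D) \<in> f ` D" using f ne by simp
  then obtain x where x: "x \<in> D" "f x = Max (f ` D)" by auto
  show ?thesis
  proof (intro bexI[OF _ x(1)] ballI)
    fix y assume "y \<in> D"
    then show "f y \<le> f x" using x(2) Max_ge[of "f ` D" "f y"] f by auto
  qed
qed

lemma sub_imp_le: "\<mu> \<in> Lam \<Longrightarrow> \<nu> \<in> Lam \<Longrightarrow> F \<nu> \<subseteq> F \<mu> \<Longrightarrow> \<forall>b\<in>Sm. cf b (\<nu> - \<mu>) \<in> \<nat>"
proof (induction "card (F \<mu> - F \<nu>)" arbitrary: \<nu> rule: less_induct)
  case less
  note m = less.prems(1) and n = less.prems(2) and sub = less.prems(3)
  show ?case
  proof (cases "F \<mu> - F \<nu> = {}")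
    case True
    then have "F \<mu> = F \<nu>" using sub by auto
    then have "\<mu> = \<nu>" using inj_F m n by blast
    then show ?thesis by (simp add: cf_zero)
  next
    case False
    have finD: "finite (F \<mu> - F \<nu>)" using finF[OF m] by simp
    obtain \<gamma> where g: "\<gamma> \<in> F \<mu> - F \<nu>" and gmin: "\<forall>y\<in>F \<mu> - F \<nu>. ht \<gamma> \<le> ht y"
      using finite_min[OF finD False, of ht] by blast
    have gQ: "\<gamma> \<in> Q" using g F_sub[OF m] by auto
    have below: "\<gamma>' \<in> F \<nu>" if g': "\<gamma>' \<in> Q" "\<forall>b\<in>Sm. cv b (\<gamma> - \<gamma>') \<in> \<nat>" "\<gamma>' \<noteq> \<gamma>" for \<gamma>'
    proof (rule ccontr)
      assume nF: "\<gamma>' \<notin> F \<nu>"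
      have "\<gamma>' \<in> F \<mu>" using F_ideal[OF m _ g'(1) g'(2)] g by auto
      then have "ht \<gamma> \<le> ht \<gamma>'" using gmin nF by auto
      moreover have "ht (\<gamma> - \<gamma>') > 0" using ht_pos[OF g'(2)] g'(3) by simp
      ultimately show False by (simp add: ht_diff)
    qed
    obtain a where a: "a \<in> Sm" "refl a \<nu> = \<nu> - a" "refl a \<nu> \<in> Lam" "F (refl a \<nu>) = insert \<gamma> (F \<nu>)"
      using up_step[OF n gQ _ below] g by blast
    have sub': "F (refl a \<nu>) \<subseteq> F \<mu>" using a(4) sub g by auto
    have "F \<mu> - F (refl a \<nu>) = (F \<mu> - F \<nu>) - {\<gamma>}" using a(4) by auto
    then have lt: "card (F \<mu> - F (refl a \<nu>)) < card (F \<mu> - F \<nu>)"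
      using card_Diff1_less[OF finD g] by simp
    have IH: "\<forall>b\<in>Sm. cf b (refl a \<nu> - \<mu>) \<in> \<nat>" using less.hyps[OF lt m a(3) sub'] .
    show ?thesis
    proof
      fix b assume b: "b \<in> Sm"
      have "cf b (\<nu> - \<mu>) = cf b (refl a \<nu> - \<mu>) + cf b a" using a(2) by (simp add: cf_diff)
      moreover have "cf b a \<in> \<nat>" using cf_basis[OF a(1), of b] by simp
      ultimately show "cf b (\<nu> - \<mu>) \<in> \<nat>" using IH b by (metis Nats_add)
    qed
  qed
qed

lemma F_fw: "F \<omega> = {}"
proof -
  have "mr id \<omega>" using gen_group_id Sm_pos by (auto simp: mr_def)
  then have "minrep \<omega> = id" using mr_minrep by blast
  then show ?thesis by (simp add: F_def invs_def)
qed

lemma surj_F: "I \<in> lower_ideals Q (root_le (coroot ` Sm)) \<Longrightarrow> \<exists>\<mu>\<in>Lam. F \<mu> = I"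
proof (induction "card I" arbitrary: I rule: less_induct)
  case less
  have IQ: "I \<subseteq> Q" and idl: "\<And>x y. x \<in> I \<Longrightarrow> y \<in> Q \<Longrightarrow> \<forall>b\<in>Sm. cv b (x - y) \<in> \<nat> \<Longrightarrow> y \<in> I"
    using less.prems by (auto simp: lower_ideals_def Qle_iff)
  have finI: "finite I" using finite_subset[OF IQ finQ] .
  show ?case
  proof (cases "I = {}")
    case True then show ?thesis using F_fw fw_Lam by blast
  next
    case False
    obtain \<gamma> where g: "\<gamma> \<in> I" and gmax: "\<forall>y\<in>I. ht y \<le> ht \<gamma>"
      using finite_max[OF finI False, of ht] by blast
    define I' where "I' = I - {\<gamma>}"
    have I'id: "I' \<in> lower_ideals Q (root_le (coroot ` Sm))"
      unfolding lower_ideals_def Qle_iff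
    proof (intro CollectI conjI ballI impI)
      show "I' \<subseteq> Q" using IQ by (auto simp: I'_def)
      fix x y assume x: "x \<in> I'" and y: "y \<in> Q" and le: "\<forall>b\<in>Sm. cv b (x - y) \<in> \<nat>"
      have yI: "y \<in> I" using idl[OF _ y le] x by (auto simp: I'_def)
      have "y \<noteq> \<gamma>"
      proof
        assume yg: "y = \<gamma>"
        have "ht x \<le> ht \<gamma>" using gmax x by (auto simp: I'_def)
        moreover have "x \<noteq> \<gamma>" using x by (simp add: I'_def)
        then have "ht (x - y) > 0" using ht_pos[OF le] yg by simp
        ultimately show False using yg by (simp add: ht_diff)
      qed
      then show "y \<in> I'" using yI by (simp add: I'_def)
    qed
    have lt: "card I' < card I" unfolding I'_def by (rule card_Diff1_less[OF finI g])
    obtain \<mu> where m: "\<mu> \<in> Lam" "F \<mu> = I'" using less.hyps[OF lt I'id] by blast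
    have gQ: "\<gamma> \<in> Q" using g IQ by auto
    have ng: "\<gamma> \<notin> F \<mu>" using m(2) by (simp add: I'_def)
    have below: "\<gamma>' \<in> F \<mu>" if "\<gamma>' \<in> Q" "\<forall>b\<in>Sm. cv b (\<gamma> - \<gamma>') \<in> \<nat>" "\<gamma>' \<noteq> \<gamma>" for \<gamma>'
      using idl[OF g that(1) that(2)] that(3) m(2) by (simp add: I'_def)
    obtain a where a: "a \<in> Sm" "refl a \<mu> \<in> Lam" "F (refl a \<mu>) = insert \<gamma> (F \<mu>)"
      using up_step[OF m(1) gQ ng below] by blast
    have "insert \<gamma> (F \<mu>) = I" using m(2) g by (auto simp: I'_def)
    then show ?thesis using a by metis
  qed
qed

end


context MS begin

abbreviation W0 where "W0 \<equiv> w0 R Sm"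
abbreviation U0 where "U0 \<equiv> w0i Sm ai"

lemma JS: "J \<subseteq> Sm" by auto

lemma W0_props: "W0 \<in> W" "invs W0 = P" "W0 (W0 x) = x"
proof -
  have e: "W0 = longest_elt W Sm" by (simp add: w0_def weyl_eq)
  have p: "W0 \<in> W \<and> invs W0 = PS Sm" using longest_elt_props[OF order_refl] e by simp
  then show "W0 \<in> W" "invs W0 = P" using PS_Sm by auto
  show "W0 (W0 x) = x" using longest_invol[OF order_refl] p by blast
qed

lemma PS_J: "PS J = {\<beta>\<in>P. cf ai \<beta> = 0}"
  using ai by (auto simp: PS_def)

lemma U0_props: "U0 \<in> gen_group J" "invs U0 = PS J" "U0 (U0 x) = x"
proof -
  have p: "U0 \<in> gen_group J \<and> invs U0 = PS J" using longest_elt_props[OF JS] by (simp add: w0i_def)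
  then show "U0 \<in> gen_group J" "invs U0 = PS J" by auto
  show "U0 (U0 x) = x" using longest_invol[OF JS] p by blast
qed

lemma U0W: "U0 \<in> W" using U0_props(1) gen_group_mono[OF JS] by blast

lemma W0_flip: "x \<in> R \<Longrightarrow> W0 x \<in> P \<longleftrightarrow> x \<notin> P"
proof -
  assume x: "x \<in> R"
  have lw: "linear W0" using gg_linear[OF W0_props(1)] .
  show ?thesis
  proof (cases "x \<in> P")
    case True
    then show ?thesis using W0_props(2) by (auto simp: invs_def)
  next
    case False
    then have "- x \<in> P" using notP_iff x by auto
    then have "W0 (- x) \<notin> P" using W0_props(2) by (auto simp: invs_def)
    then have "- W0 x \<notin> P" by (simp add: linear_neg[OF lw])
    moreover have "W0 x \<in> R" using W_R[OF W0_props(1) order_refl x] .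
    ultimately show ?thesis using False notP_iff negR by (metis minus_minus)
  qed
qed

lemma cf_ai_U0: "cf ai (U0 x) = cf ai x"
  using gg_cf_fix[OF JS U0_props(1)] ai by simp

lemma U0_Q: assumes g: "\<gamma> \<in> Q" shows "U0 \<gamma> \<in> Q"
proof -
  obtain \<beta> where b: "\<beta> \<in> Qt" "\<gamma> = coroot \<beta>" using Q_cases[OF g] by blast
  have "U0 \<gamma> = coroot (U0 \<beta>)" using coroot_orth[OF gen_group_orth[OF U0_props(1)]] b by simp
  moreover have "U0 \<beta> \<in> R" using W_R[OF U0W order_refl QtR[OF b(1)]] .
  moreover have "cf ai (U0 \<beta>) > 0" using b(1) cf_ai_U0 by (simp add: Qt_def)
  ultimately show ?thesis using Q_eq pos_of_coord by (auto simp: Qt_def)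
qed

lemma Lam_W0: "\<mu> \<in> Lam \<Longrightarrow> W0 \<mu> \<in> Lam"
  using Lam_W W0_props(1) by blast

lemma minrep_W0: assumes m: "\<mu> \<in> Lam" shows "mr (W0 \<circ> minrep \<mu> \<circ> U0) (W0 \<mu>)"
proof -
  define w where "w = minrep \<mu>"
  have w: "mr w \<mu>" using minrep[OF m] by (simp add: w_def)
  have wW: "w \<in> W" using w by (simp add: mr_def)
  show ?thesis
    unfolding mr_def w_def[symmetric]
  proof (intro conjI ballI)
    show "W0 \<circ> w \<circ> U0 \<in> W" using gen_group_comp[OF gen_group_comp[OF W0_props(1) wW] U0W] .
    show "(W0 \<circ> w \<circ> U0) \<omega> = W0 \<mu>" using gJ_fw[OF U0_props(1)] w by (simp add: mr_def)
    fix b assume b: "b \<in> J"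
    have "b \<in> PS J" using b Sm_pos cf_basis[of b ai] by (auto simp: PS_J)
    then have "U0 b \<notin> P" using U0_props(2) by (auto simp: invs_def)
    moreover have ubR: "U0 b \<in> R" using W_R[OF U0W order_refl] b SmR by auto
    moreover have "cf ai (U0 b) = 0" using cf_ai_U0 b cf_basis[of b ai] by auto
    ultimately have "w (U0 b) \<notin> P" using mr_neg[OF w] by blast
    moreover have "w (U0 b) \<in> R" using W_R[OF wW order_refl ubR] .
    ultimately show "(W0 \<circ> w \<circ> U0) b \<in> P" using W0_flip by simp
  qed
qed

lemma F_W0: assumes m: "\<mu> \<in> Lam" shows "F (W0 \<mu>) = Q - U0 ` F \<mu>"
proof (rule set_eqI)
  fix \<gamma>
  define w where "w = minrep \<mu>"
  have w: "mr w \<mu>" using minrep[OF m] by (simp add: w_def)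
  have wW: "w \<in> W" using w by (simp add: mr_def)
  have mn: "minrep (W0 \<mu>) = W0 \<circ> w \<circ> U0" using mr_minrep[OF minrep_W0[OF m]] by (simp add: w_def)
  have oU: "orth U0" using gen_group_orth[OF U0_props(1)] .
  show "\<gamma> \<in> F (W0 \<mu>) \<longleftrightarrow> \<gamma> \<in> Q - U0 ` F \<mu>"
  proof (cases "\<gamma> \<in> Q")
    case False
    then show ?thesis using F_sub[OF Lam_W0[OF m]] by auto
  next
    case True
    obtain \<beta> where b: "\<beta> \<in> Qt" "\<gamma> = coroot \<beta>" using Q_cases[OF True] by blast
    have bR: "\<beta> \<in> R" using QtR[OF b(1)] .
    have cg: "coroot \<gamma> = \<beta>" using b coroot_coroot[OF nzR[OF bR]] by simp
    have ubR: "U0 \<beta> \<in> R" using W_R[OF U0W order_refl bR] .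
    have wubR: "w (U0 \<beta>) \<in> R" using W_R[OF wW order_refl ubR] .
    have uQ: "U0 \<gamma> \<in> Q" using U0_Q[OF True] .
    have cu: "coroot (U0 \<gamma>) = U0 \<beta>"
      using coroot_orth[OF oU, of \<gamma>] cg by simp
    have "\<gamma> \<in> F (W0 \<mu>) \<longleftrightarrow> W0 (w (U0 \<beta>)) \<notin> P"
      using F_mem[OF Lam_W0[OF m]] True mn cg by simp
    also have "\<dots> \<longleftrightarrow> w (U0 \<beta>) \<in> P" using W0_flip[OF wubR] by simp
    also have "\<dots> \<longleftrightarrow> U0 \<gamma> \<notin> F \<mu>" using F_mem[OF m] uQ cu by (simp add: w_def)
    also have "\<dots> \<longleftrightarrow> \<gamma> \<notin> U0 ` F \<mu>" using U0_props(3) by (metis image_iff)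
    finally show ?thesis using True by simp
  qed
qed

lemma W0_rev: assumes le: "\<forall>b\<in>Sm. cf b (y - x) \<in> \<nat>" shows "\<forall>b\<in>Sm. cf b (W0 x - W0 y) \<in> \<nat>"
proof
  fix b assume b: "b \<in> Sm"
  have lw: "linear W0" using gg_linear[OF W0_props(1)] .
  have "W0 x - W0 y = W0 (- (y - x))" by (simp add: linear_neg[OF lw] linear_diff[OF lw])
  also have "\<dots> = W0 (\<Sum>c\<in>Sm. cf c (y - x) *\<^sub>R (- c))"
  proof -
    have s: "(\<Sum>c\<in>Sm. cf c (y - x) *\<^sub>R (- c)) = - (y - x)"
      using cf_expand[of "y - x"] by (simp add: sum_negf)
    show ?thesis by (simp only: s)
  qed
  also have "\<dots> = (\<Sum>c\<in>Sm. cf c (y - x) *\<^sub>R (- W0 c))"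
    by (simp add: linear_sum[OF lw] linear_scale[OF lw] linear_neg[OF lw])
  finally have e: "cf b (W0 x - W0 y) = (\<Sum>c\<in>Sm. cf c (y - x) * cf b (- W0 c))"
    by (simp add: cf_sum cf_scale cf_neg)
  have t: "cf c (y - x) * cf b (- W0 c) \<in> \<nat>" if c: "c \<in> Sm" for c
  proof -
    have cR: "c \<in> R" using c SmR by auto
    have "W0 c \<notin> P" using W0_flip[OF cR] Sm_pos[OF c] by simp
    then have "- W0 c \<in> P" using notP_iff W_R[OF W0_props(1) order_refl cR] by auto
    then show ?thesis using pos_nat le c by (simp add: Nats_mult)
  qed
  have i: "(\<Sum>c\<in>Sm. cf c (y - x) * cf b (- W0 c)) \<in> \<int>"
    by (rule Ints_sum) (use t Nats_subset_Ints in blast)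
  have p: "(\<Sum>c\<in>Sm. cf c (y - x) * cf b (- W0 c)) \<ge> 0"
    by (rule sum_nonneg) (use t Nats_ge0 in blast)
  have "(\<Sum>c\<in>Sm. cf c (y - x) * cf b (- W0 c)) \<in> \<nat>" using i p by (simp add: Nats_altdef2)
  then show "cf b (W0 x - W0 y) \<in> \<nat>" using e by simp
qed

theorem main:
  "\<exists>f. compl_poset_iso Lam (root_le Sm) W0 (lower_ideals Q (root_le (coroot ` Sm))) (\<subseteq>) (ideal_compl Q U0) f"
proof (intro exI)
  define f where "f \<mu> = F (W0 \<mu>)" for \<mu>
  have ww: "W0 (W0 \<mu>) = \<mu>" for \<mu> using W0_props(3) .
  have le_iff: "root_le Sm x y \<longleftrightarrow> (\<forall>b\<in>Sm. cf b (y - x) \<in> \<nat>)" for x y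
    by (simp add: root_le_def nn_comb_iff)
  show "compl_poset_iso Lam (root_le Sm) W0 (lower_ideals Q (root_le (coroot ` Sm))) (\<subseteq>) (ideal_compl Q U0) f"
    unfolding compl_poset_iso_def
  proof (intro conjI ballI)
    show "bij_betw f Lam (lower_ideals Q (root_le (coroot ` Sm)))"
    proof (rule bij_betwI')
      fix x y assume x: "x \<in> Lam" and y: "y \<in> Lam"
      show "(f x = f y) = (x = y)"
        using inj_F[OF Lam_W0[OF x] Lam_W0[OF y]] ww by (metis f_def)
    next
      fix x assume "x \<in> Lam"
      then show "f x \<in> lower_ideals Q (root_le (coroot ` Sm))" using F_in_ideals Lam_W0 by (simp add: f_def)
    next
      fix I assume "I \<in> lower_ideals Q (root_le (coroot ` Sm))"
      then obtain \<mu> where m: "\<mu> \<in> Lam" "F \<mu> = I" using surj_F by blast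
      then show "\<exists>x\<in>Lam. I = f x" using Lam_W0[OF m(1)] ww by (metis f_def)
    qed
  next
    fix x y assume x: "x \<in> Lam" and y: "y \<in> Lam"
    show "root_le Sm x y \<longleftrightarrow> f x \<subseteq> f y"
    proof
      assume "root_le Sm x y"
      then have "\<forall>b\<in>Sm. cf b (W0 x - W0 y) \<in> \<nat>" using W0_rev le_iff by blast
      then show "f x \<subseteq> f y" using le_imp_sub[OF Lam_W0[OF y] Lam_W0[OF x]] by (simp add: f_def)
    next
      assume "f x \<subseteq> f y"
      then have "\<forall>b\<in>Sm. cf b (W0 x - W0 y) \<in> \<nat>" using sub_imp_le[OF Lam_W0[OF y] Lam_W0[OF x]] by (simp add: f_def)
      then have "\<forall>b\<in>Sm. cf b (W0 (W0 y) - W0 (W0 x)) \<in> \<nat>" using W0_rev by blast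
      then show "root_le Sm x y" using le_iff ww by simp
    qed
  next
    fix x assume x: "x \<in> Lam"
    have "ideal_compl Q U0 (f x) = Q - U0 ` (Q - U0 ` F x)" using F_W0[OF x] by (simp add: ideal_compl_def f_def)
    also have "\<dots> = F x"
    proof -
      have sub: "F x \<subseteq> Q" using F_sub[OF x] .
      have "U0 ` (Q - U0 ` F x) = Q - F x"
      proof
        show "U0 ` (Q - U0 ` F x) \<subseteq> Q - F x"
          using U0_Q U0_props(3) by (auto simp: image_iff) (metis)
        show "Q - F x \<subseteq> U0 ` (Q - U0 ` F x)"
        proof
          fix z assume z: "z \<in> Q - F x"
          have "U0 z \<in> Q - U0 ` F x" using z U0_Q U0_props(3) by (auto simp: image_iff) (metis)
          moreover have "z = U0 (U0 z)" using U0_props(3) by simp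
          ultimately show "z \<in> U0 ` (Q - U0 ` F x)" by blast
        qed
      qed
      then show ?thesis using sub by auto
    qed
    finally show "f (W0 x) = ideal_compl Q U0 (f x)" using ww by (simp add: f_def)
  qed
qed

end

theorem lemma6p3:
  fixes R Sm :: "'a::euclidean_space set" and ai :: 'a
  assumes "root_system R" and "irreducible_rs R" and "is_base R Sm"
    and "ai \<in> Sm" and "minuscule R Sm ai"
  shows "\<exists>f. compl_poset_iso
            (weights_irrep R Sm (fund_weight Sm ai)) (root_le Sm) (w0 R Sm)
            (lower_ideals (coroot_class R Sm ai) (root_le (coroot ` Sm))) (\<subseteq>)
            (ideal_compl (coroot_class R Sm ai) (w0i Sm ai))
            f"
proof -
  interpret MS R Sm ai
    using assms by (simp add: MS_def MS_axioms_def RSi_def RSi_axioms_def RS_def)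
  show ?thesis using main .
qed

end
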